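(* Let $\alpha,\beta\in\Bbbk^n$, let $\mathcal H=\mathcal H(\alpha,\beta,0)$ and let $M$ be the adjacency matrix of $Q$. Then the matrix-valued Hilbert series of $\mathcal H$ is \[h_{\mathcal H}(t)=(I-Mt+Mt^3-It^4)^{-1}=(I-Mt+It^2)^{-1}(1-t^2)^{-1}.\]
   Context: $\Bbbk$ is an algebraically closed field of characteristic zero. Fix $n\ge1$; indices mod $n$, $Q_0=\{0,\dots,n-1\}$. $Q$ is the quiver with vertices $Q_0$ and arrows $u_i:i\to i+1$, $d_i:i+1\to i$; paths are written left to right, $e_i$ is the trivial path at $i$. $\mathcal H(\alpha,\beta,0)$ is $\Bbbk Q$ modulo the relations $d_{i-1}u_{i-1}u_i=\alpha_iu_id_iu_i+\beta_iu_iu_{i+1}d_{i+1}$ and $d_id_{i-1}u_{i-1}=\alpha_id_iu_id_i+\beta_iu_{i+1}d_{i+1}d_i$ for all $i\in Q_0$, graded by path length. The adjacency matrix $M\in M_n(\mathbb N)$ has $(i,j)$ entry the number of arrows from $i$ to $j$. The matrix-valued Hilbert series is $\sum_kH_kt^k$ with $(H_k)_{ij}=\dim_\Bbbk e_i\mathcal H_ke_j$. *)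

theory Defs
  imports "HOL-Computational_Algebra.Formal_Power_Series"
          "HOL-Computational_Algebra.Polynomial"
          "HOL-Library.Function_Algebras"
          "Jordan_Normal_Form.Matrix"
begin

text \<open>Arrows of Q: (True, i) is u_i : i -> i+1, (False, i) is d_i : i+1 -> i (indices mod n).\<close>
type_synonym arrow = "bool \<times> nat"
text \<open>A path is a start vertex together with a list of arrows, read left to right.
  The trivial path e_i is (i, []).\<close>
type_synonym path = "nat \<times> arrow list"

definition arr_src :: "nat \<Rightarrow> arrow \<Rightarrow> nat" where
  "arr_src n a = (if fst a then snd a mod n else Suc (snd a) mod n)"

definition arr_tgt :: "nat \<Rightarrow> arrow \<Rightarrow> nat" where
  "arr_tgt n a = (if fst a then Suc (snd a) mod n else snd a mod n)"

fun is_walk :: "nat \<Rightarrow> nat \<Rightarrow> arrow list \<Rightarrow> bool" where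
  "is_walk n v [] = True"
| "is_walk n v (a # as) = (snd a < n \<and> arr_src n a = v \<and> is_walk n (arr_tgt n a) as)"

fun walk_end :: "nat \<Rightarrow> nat \<Rightarrow> arrow list \<Rightarrow> nat" where
  "walk_end n v [] = v"
| "walk_end n v (a # as) = walk_end n (arr_tgt n a) as"

definition valid_path :: "nat \<Rightarrow> path \<Rightarrow> bool" where
  "valid_path n p = (fst p < n \<and> is_walk n (fst p) (snd p))"

text \<open>Paths of length k from i to j (i.e. the basis of e_i (kQ)_k e_j).\<close>
definition paths_of :: "nat \<Rightarrow> nat \<Rightarrow> nat \<Rightarrow> nat \<Rightarrow> path set" where
  "paths_of n k i j = {p. valid_path n p \<and> fst p = i \<and> length (snd p) = k \<and> walk_end n i (snd p) = j}"

text \<open>Elements of the path algebra kQ are represented as coefficient functions on paths.\<close>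
definition fscale :: "'a::field \<Rightarrow> (path \<Rightarrow> 'a) \<Rightarrow> (path \<Rightarrow> 'a)" where
  "fscale c f = (\<lambda>q. c * f q)"

definition pvec :: "path \<Rightarrow> path \<Rightarrow> 'a::field" where
  "pvec p = (\<lambda>q. if q = p then 1 else 0)"

text \<open>Multiplication in kQ (concatenation of paths, zero if they do not compose).\<close>
definition pmult :: "nat \<Rightarrow> (path \<Rightarrow> 'a::field) \<Rightarrow> (path \<Rightarrow> 'a) \<Rightarrow> path \<Rightarrow> 'a" where
  "pmult n f g = (\<lambda>(v, cs). \<Sum>m\<le>length cs. f (v, take m cs) * g (walk_end n v (take m cs), drop m cs))"

abbreviation U :: "nat \<Rightarrow> arrow" where "U i \<equiv> (True, i)"
abbreviation D :: "nat \<Rightarrow> arrow" where "D i \<equiv> (False, i)"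

definition rel1 :: "nat \<Rightarrow> (nat \<Rightarrow> 'a::field) \<Rightarrow> (nat \<Rightarrow> 'a) \<Rightarrow> nat \<Rightarrow> path \<Rightarrow> 'a" where
  "rel1 n \<alpha> \<beta> i =
     pvec (i, [D ((i + n - 1) mod n), U ((i + n - 1) mod n), U i])
     - fscale (\<alpha> i) (pvec (i, [U i, D i, U i]))
     - fscale (\<beta> i) (pvec (i, [U i, U (Suc i mod n), D (Suc i mod n)]))"

definition rel2 :: "nat \<Rightarrow> (nat \<Rightarrow> 'a::field) \<Rightarrow> (nat \<Rightarrow> 'a) \<Rightarrow> nat \<Rightarrow> path \<Rightarrow> 'a" where
  "rel2 n \<alpha> \<beta> i =
     pvec (Suc i mod n, [D i, D ((i + n - 1) mod n), U ((i + n - 1) mod n)])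
     - fscale (\<alpha> i) (pvec (Suc i mod n, [D i, U i, D i]))
     - fscale (\<beta> i) (pvec (Suc i mod n, [U (Suc i mod n), D (Suc i mod n), D i]))"

definition rels :: "nat \<Rightarrow> (nat \<Rightarrow> 'a::field) \<Rightarrow> (nat \<Rightarrow> 'a) \<Rightarrow> (path \<Rightarrow> 'a) set" where
  "rels n \<alpha> \<beta> = {rel1 n \<alpha> \<beta> i | i. i < n} \<union> {rel2 n \<alpha> \<beta> i | i. i < n}"

definition rel_ideal :: "nat \<Rightarrow> (nat \<Rightarrow> 'a::field) \<Rightarrow> (nat \<Rightarrow> 'a) \<Rightarrow> (path \<Rightarrow> 'a) set" where
  "rel_ideal n \<alpha> \<beta> = Modules.module.span fscale
     {pmult n (pmult n (pvec p) r) (pvec q) | p r q.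
        valid_path n p \<and> valid_path n q \<and> r \<in> rels n \<alpha> \<beta>}"

definition comp_space :: "nat \<Rightarrow> nat \<Rightarrow> nat \<Rightarrow> nat \<Rightarrow> (path \<Rightarrow> 'a::field) set" where
  "comp_space n k i j = {f. \<forall>p. f p \<noteq> 0 \<longrightarrow> p \<in> paths_of n k i j}"

definition hdim :: "nat \<Rightarrow> (nat \<Rightarrow> 'a::field) \<Rightarrow> (nat \<Rightarrow> 'a) \<Rightarrow> nat \<Rightarrow> nat \<Rightarrow> nat \<Rightarrow> nat" where
  "hdim n \<alpha> \<beta> k i j =
     Vector_Spaces.vector_space.dim fscale (comp_space n k i j :: (path \<Rightarrow> 'a) set)
     - Vector_Spaces.vector_space.dim fscale (rel_ideal n \<alpha> \<beta> \<inter> comp_space n k i j)"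

definition hilbert_matrix :: "nat \<Rightarrow> (nat \<Rightarrow> 'a::field) \<Rightarrow> (nat \<Rightarrow> 'a) \<Rightarrow> int fps mat" where
  "hilbert_matrix n \<alpha> \<beta> = mat n n (\<lambda>(i, j). Abs_fps (\<lambda>k. int (hdim n \<alpha> \<beta> k i j)))"

definition adjacency_matrix :: "nat \<Rightarrow> int mat" where
  "adjacency_matrix n = mat n n (\<lambda>(i, j).
     int (card {a :: arrow. snd a < n \<and> arr_src n a = i \<and> arr_tgt n a = j}))"

end

theory Submission
  imports Defs
begin

lemma sum_fun_app: "(sum f A) x = sum (\<lambda>a. f a x) A"
  by (induction A rule: infinite_finite_induct) auto

definition nxt :: "nat \<Rightarrow> nat \<Rightarrow> bool \<Rightarrow> nat" where
  "nxt n v b = (if b then Suc v mod n else (v + n - 1) mod n)"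

fun vert :: "nat \<Rightarrow> nat \<Rightarrow> bool list \<Rightarrow> nat" where
  "vert n v [] = v"
| "vert n v (b # bs) = vert n (nxt n v b) bs"

definition arr :: "nat \<Rightarrow> nat \<Rightarrow> bool \<Rightarrow> arrow" where
  "arr n v b = (if b then (True, v) else (False, (v + n - 1) mod n))"

fun to_arr :: "nat \<Rightarrow> nat \<Rightarrow> bool list \<Rightarrow> arrow list" where
  "to_arr n v [] = []"
| "to_arr n v (b # bs) = arr n v b # to_arr n (nxt n v b) bs"

lemma m1: "0 < n \<Longrightarrow> i < n \<Longrightarrow> Suc ((i + n - 1) mod n) mod n = i"
  by (cases i) (auto simp: mod_Suc le_imp_less_Suc Suc_diff_le)

lemma m2: "0 < n \<Longrightarrow> i < n \<Longrightarrow> (Suc i mod n + n - 1) mod n = i"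
  by (auto simp: mod_Suc)

lemma m1'[simp]: "0 < n \<Longrightarrow> i < n \<Longrightarrow> Suc ((i + n - Suc 0) mod n) mod n = i"
  using m1 by simp

lemma m2'[simp]: "0 < n \<Longrightarrow> i < n \<Longrightarrow> (Suc i mod n + n - Suc 0) mod n = i"
  using m2 by simp

lemma m3: "0 < n \<Longrightarrow> v < n \<Longrightarrow> s < n \<Longrightarrow> (Suc s mod n = v) \<longleftrightarrow> s = (v + n - 1) mod n"
  using m1 m2 by metis

lemma nxt_lt: "0 < n \<Longrightarrow> nxt n v b < n"
  by (simp add: nxt_def)

lemma vert_lt: "0 < n \<Longrightarrow> v < n \<Longrightarrow> vert n v bs < n"
  by (induction bs arbitrary: v) (auto simp: nxt_lt)

lemma vert_append: "vert n v (X @ Y) = vert n (vert n v X) Y"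
  by (induction X arbitrary: v) auto

lemma to_arr_append: "to_arr n v (X @ Y) = to_arr n v X @ to_arr n (vert n v X) Y"
  by (induction X arbitrary: v) auto

lemma map_fst_to_arr[simp]: "map fst (to_arr n v bs) = bs"
  by (induction bs arbitrary: v) (auto simp: arr_def)

lemma length_to_arr[simp]: "length (to_arr n v bs) = length bs"
  by (induction bs arbitrary: v) auto

lemma walk_end_to_arr: "walk_end n v (to_arr n v bs) = vert n v bs"
  by (induction bs arbitrary: v) (auto simp: arr_def arr_tgt_def nxt_def)

lemma is_walk_iff: "0 < n \<Longrightarrow> v < n \<Longrightarrow> is_walk n v cs \<longleftrightarrow> cs = to_arr n v (map fst cs)"
proof (induction cs arbitrary: v)
  case Nil then show ?case by simp
next
  case (Cons a cs)
  obtain b s where a: "a = (b, s)" by fastforce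
  have key: "(s < n \<and> arr_src n a = v) \<longleftrightarrow> a = arr n v b"
    using Cons.prems m3[of n v s] by (auto simp: a arr_src_def arr_def)
  have tg: "a = arr n v b \<Longrightarrow> arr_tgt n a = nxt n v b"
    by (auto simp: arr_def arr_tgt_def nxt_def a)
  show ?case
    using key tg Cons.IH[of "nxt n v b"] nxt_lt[of n v b] Cons.prems
    by (auto simp: a)
qed

lemma valid_path_iff: "0 < n \<Longrightarrow> valid_path n (v, cs) \<longleftrightarrow> v < n \<and> cs = to_arr n v (map fst cs)"
  using is_walk_iff by (auto simp: valid_path_def)

lemma mem_paths_of: "0 < n \<Longrightarrow> (v, to_arr n v bs) \<in> paths_of n k i j \<longleftrightarrow> v < n \<and> v = i \<and> length bs = k \<and> vert n v bs = j"
  by (auto simp: paths_of_def valid_path_iff walk_end_to_arr)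

lemma paths_of_ex: "0 < n \<Longrightarrow> p \<in> paths_of n k i j \<Longrightarrow> p = (i, to_arr n i (map fst (snd p))) \<and> i < n \<and> length (map fst (snd p)) = k \<and> vert n i (map fst (snd p)) = j"
proof -
  assume n: "0 < n" and p: "p \<in> paths_of n k i j"
  obtain a b where ab: "p = (a, b)" by fastforce
  have v: "valid_path n (a, b)" and a: "a = i" and l: "length b = k" and w: "walk_end n i b = j"
    using p by (auto simp: paths_of_def ab)
  have b: "b = to_arr n a (map fst b)" and an: "a < n" using v n by (auto simp: valid_path_iff)
  have "vert n i (map fst b) = j" using w b a walk_end_to_arr by metis
  then show ?thesis using ab a l an b by auto
qed

lemma finite_paths_of: assumes "0 < n" shows "finite (paths_of n k i j)"
proof -
  have "paths_of n k i j \<subseteq> (\<lambda>bs. (i, to_arr n i bs)) ` {bs. length bs = k}"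
  proof
    fix p assume "p \<in> paths_of n k i j"
    from paths_of_ex[OF assms this] show "p \<in> (\<lambda>bs. (i, to_arr n i bs)) ` {bs. length bs = k}"
      by (intro image_eqI[where x = "map fst (snd p)"]) auto
  qed
  moreover have "finite {bs :: bool list. length bs = k}"
    using finite_lists_length_eq[of "UNIV :: bool set"] by simp
  ultimately show ?thesis by (meson finite_surj)
qed

definition pat :: "bool \<Rightarrow> bool list" where
  "pat t = (if t then [False, True, True] else [False, False, True])"
definition r1 :: "bool \<Rightarrow> bool list" where
  "r1 t = (if t then [True, False, True] else [False, True, False])"
definition r2 :: "bool \<Rightarrow> bool list" where
  "r2 t = (if t then [True, True, False] else [True, False, False])"
definition ci :: "nat \<Rightarrow> nat \<Rightarrow> bool \<Rightarrow> nat" where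
  "ci n w t = (if t then w else (w + n - 1) mod n)"

lemma vert_pat: "0 < n \<Longrightarrow> w < n \<Longrightarrow> vert n w (r1 t) = vert n w (pat t) \<and> vert n w (r2 t) = vert n w (pat t)"
  by (cases t) (auto simp: pat_def r1_def r2_def nxt_def m1 m2)

lemma to_arr_rel1: "0 < n \<Longrightarrow> i < n \<Longrightarrow>
   to_arr n i (pat True) = [D ((i + n - 1) mod n), U ((i + n - 1) mod n), U i] \<and>
   to_arr n i (r1 True) = [U i, D i, U i] \<and>
   to_arr n i (r2 True) = [U i, U (Suc i mod n), D (Suc i mod n)]"
  by (auto simp: pat_def r1_def r2_def nxt_def arr_def m1 m2)

lemma to_arr_rel2: "0 < n \<Longrightarrow> i < n \<Longrightarrow>
   to_arr n (Suc i mod n) (pat False) = [D i, D ((i + n - 1) mod n), U ((i + n - 1) mod n)] \<and>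
   to_arr n (Suc i mod n) (r1 False) = [D i, U i, D i] \<and>
   to_arr n (Suc i mod n) (r2 False) = [U (Suc i mod n), D (Suc i mod n), D i]"
  by (auto simp: pat_def r1_def r2_def nxt_def arr_def m1 m2)

fun findp :: "bool list \<Rightarrow> (bool list \<times> bool \<times> bool list) option" where
  "findp [] = None"
| "findp (b # r) = (if take 3 (b # r) = pat True then Some ([], True, drop 2 r)
     else if take 3 (b # r) = pat False then Some ([], False, drop 2 r)
     else map_option (\<lambda>(X, t, Y). (b # X, t, Y)) (findp r))"

declare findp.simps(2)[simp del]

lemma patTF: "pat True \<noteq> pat False" by (simp add: pat_def)

lemma findp_T: "take 3 (b # r) = pat True \<Longrightarrow> findp (b # r) = Some ([], True, drop 2 r)"
  by (simp add: findp.simps)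
lemma findp_F: "take 3 (b # r) = pat False \<Longrightarrow> findp (b # r) = Some ([], False, drop 2 r)"
  using patTF by (simp add: findp.simps)
lemma findp_E: "take 3 (b # r) \<noteq> pat True \<Longrightarrow> take 3 (b # r) \<noteq> pat False \<Longrightarrow>
   findp (b # r) = map_option (\<lambda>(X, t, Y). (b # X, t, Y)) (findp r)"
  by (simp add: findp.simps)

lemma tk: "take 3 (b # r) = q \<Longrightarrow> length q = 3 \<Longrightarrow> b # r = q @ drop 2 r"
  by (metis append_take_drop_id drop_Suc_Cons numeral_3_eq_3 numeral_2_eq_2)

lemma findp_Some: "findp bs = Some (X, t, Y) \<Longrightarrow> bs = X @ pat t @ Y"
proof (induction bs arbitrary: X t Y)
  case Nil then show ?case by simp
next
  case (Cons b r)
  show ?case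
  proof (cases "take 3 (b # r) = pat True")
    case True then show ?thesis using Cons.prems tk[OF True] findp_T[OF True] by (auto simp: pat_def)
  next
    case f1: False
    show ?thesis
    proof (cases "take 3 (b # r) = pat False")
      case True then show ?thesis using Cons.prems tk[OF True] findp_F[OF True] by (auto simp: pat_def)
    next
      case False
      then obtain X' where "findp r = Some (X', t, Y)" "X = b # X'"
        using Cons.prems f1 findp_E[OF f1 False] by (auto split: option.splits)
      then show ?thesis using Cons.IH by auto
    qed
  qed
qed

lemma findp_occ: "\<exists>X0 t0 Y0. findp (X @ pat t @ Y) = Some (X0, t0, Y0) \<and>
   ((X0 = X \<and> t0 = t \<and> Y0 = Y) \<or> (t0 = False \<and> t = True \<and> X = X0 @ [False] \<and> Y0 = True # Y)
    \<or> (\<exists>Z. X = X0 @ pat t0 @ Z \<and> Y0 = Z @ pat t @ Y))"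
proof (induction X)
  case Nil
  show ?case
  proof (cases t)
    case True
    have "take 3 (pat t @ Y) = pat True" using True by (simp add: pat_def)
    from findp_T[of False "[True, True] @ Y"] show ?thesis using True by (force simp: pat_def)
  next
    case False
    from findp_F[of False "[False, True] @ Y"] show ?thesis using False by (force simp: pat_def)
  qed
next
  case (Cons c X')
  let ?R = "X' @ pat t @ Y"
  show ?case
  proof (cases "take 3 (c # ?R) = pat True \<or> take 3 (c # ?R) = pat False")
    case False
    then have E: "findp (c # ?R) = map_option (\<lambda>(X, t, Y). (c # X, t, Y)) (findp ?R)"
      using findp_E by blast
    from Cons.IH obtain X0 t0 Y0 where "findp ?R = Some (X0, t0, Y0)" and
      D: "(X0 = X' \<and> t0 = t \<and> Y0 = Y) \<or> (t0 = False \<and> t = True \<and> X' = X0 @ [False] \<and> Y0 = True # Y)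
    \<or> (\<exists>Z. X' = X0 @ pat t0 @ Z \<and> Y0 = Z @ pat t @ Y)" by blast
    then have "findp (c # ?R) = Some (c # X0, t0, Y0)" using E by simp
    then show ?thesis using D by auto
  next
    case True
    consider (a) "X' = []" | (b) x where "X' = [x]" | (c) x1 x2 Z where "X' = x1 # x2 # Z"
      by (metis list.exhaust)
    then show ?thesis
    proof cases
      case a
      have tt: "t = True" "c = False" using True by (cases t; auto simp: a pat_def)+
      have "take 3 (c # ?R) = pat False" using tt by (simp add: a pat_def)
      from findp_F[OF this] show ?thesis using tt by (force simp: a pat_def)
    next
      case b
      have "take 3 (c # X' @ pat t @ Y) \<noteq> pat t'" for t' by (cases t; cases t') (auto simp: b pat_def)
      then show ?thesis using True by blast
    next
      case c
      show ?thesis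
      proof (cases "take 3 (c # ?R) = pat True")
        case T: True
        then have h: "[c, x1, x2] = pat True" by (simp add: c)
        show ?thesis using findp_T[OF T] h by (force simp: c pat_def)
      next
        case F: False
        then have T2: "take 3 (c # ?R) = pat False" using True by blast
        then have h: "[c, x1, x2] = pat False" by (simp add: c)
        show ?thesis using findp_F[OF T2] h by (force simp: c pat_def)
      qed
    qed
  qed
qed

lemma findp_None: "findp bs = None \<longleftrightarrow> (\<nexists>X t Y. bs = X @ pat t @ Y)"
  by (metis findp_Some findp_occ option.distinct(1) option.exhaust prod_cases3)

abbreviation cT :: "bool list \<Rightarrow> nat" where "cT bs \<equiv> length (filter (\<lambda>b. b) bs)"
abbreviation cF :: "bool list \<Rightarrow> nat" where "cF bs \<equiv> length (filter Not bs)"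

fun invc :: "bool list \<Rightarrow> nat" where
  "invc [] = 0"
| "invc (b # bs) = (if b then 0 else cT bs) + invc bs"

lemma invc_append: "invc (X @ Y) = invc X + invc Y + cF X * cT Y"
  by (induction X) auto

lemma invc_lt: "invc (X @ r1 t @ Y) < invc (X @ pat t @ Y) \<and> invc (X @ r2 t @ Y) < invc (X @ pat t @ Y)"
  by (cases t) (auto simp: invc_append pat_def r1_def r2_def)

lemma counts_pat: "length (r1 t) = length (pat t) \<and> length (r2 t) = length (pat t) \<and>
   cT (r1 t) = cT (pat t) \<and> cT (r2 t) = cT (pat t)"
  by (cases t) (auto simp: pat_def r1_def r2_def)

function nf :: "nat \<Rightarrow> (nat \<Rightarrow> 'a::field) \<Rightarrow> (nat \<Rightarrow> 'a) \<Rightarrow> nat \<Rightarrow> bool list \<Rightarrow> bool list \<Rightarrow> 'a" where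
  "nf n \<alpha> \<beta> v bs = (case findp bs of None \<Rightarrow> (\<lambda>w. if w = bs then 1 else 0)
    | Some (X, t, Y) \<Rightarrow> (\<lambda>w. \<alpha> (ci n (vert n v X) t) * nf n \<alpha> \<beta> v (X @ r1 t @ Y) w
                          + \<beta> (ci n (vert n v X) t) * nf n \<alpha> \<beta> v (X @ r2 t @ Y) w))"
  by pat_completeness auto
termination
  by (relation "measure (\<lambda>(n, \<alpha>, \<beta>, v, bs). invc bs)") (auto dest!: findp_Some simp: invc_lt)

declare nf.simps[simp del]

lemma nf_None: "findp bs = None \<Longrightarrow> nf n \<alpha> \<beta> v bs = (\<lambda>w. if w = bs then 1 else 0)"
  by (simp add: nf.simps)

lemma nf_Some: "findp bs = Some (X, t, Y) \<Longrightarrow> nf n \<alpha> \<beta> v bs = (\<lambda>w. \<alpha> (ci n (vert n v X) t) * nf n \<alpha> \<beta> v (X @ r1 t @ Y) w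
                          + \<beta> (ci n (vert n v X) t) * nf n \<alpha> \<beta> v (X @ r2 t @ Y) w)"
  by (simp add: nf.simps)

lemma nf_supp: "nf n \<alpha> \<beta> v bs w \<noteq> 0 \<Longrightarrow> findp w = None \<and> length w = length bs \<and> cT w = cT bs"
proof (induction n \<alpha> \<beta> v bs rule: nf.induct)
  case (1 n \<alpha> \<beta> v bs)
  show ?case
  proof (cases "findp bs")
    case None then show ?thesis using 1(3) by (simp add: nf_None split: if_splits)
  next
    case (Some a)
    then obtain X t Y where F: "findp bs = Some (X, t, Y)" by (cases a) auto
    have bs: "bs = X @ pat t @ Y" using findp_Some[OF F] .
    from 1(3) F have "nf n \<alpha> \<beta> v (X @ r1 t @ Y) w \<noteq> 0 \<or> nf n \<alpha> \<beta> v (X @ r2 t @ Y) w \<noteq> 0"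
      by (auto simp: nf_Some)
    then show ?thesis
      using 1(1)[OF F refl refl] 1(2)[OF F refl refl] counts_pat[of t] bs by auto
  qed
qed

lemma nf_normal: "findp bs = None \<Longrightarrow> nf n \<alpha> \<beta> v bs = (\<lambda>w. if w = bs then 1 else 0)"
  by (rule nf_None)

context
  fixes n :: nat and \<alpha> \<beta> :: "nat \<Rightarrow> 'a::field" and v :: nat
  assumes n: "0 < n" and v: "v < n"
begin

lemma nf_occ: "nf n \<alpha> \<beta> v (X @ pat t @ Y) = (\<lambda>w. \<alpha> (ci n (vert n v X) t) * nf n \<alpha> \<beta> v (X @ r1 t @ Y) w
                          + \<beta> (ci n (vert n v X) t) * nf n \<alpha> \<beta> v (X @ r2 t @ Y) w)"
proof (induction "invc (X @ pat t @ Y)" arbitrary: X t Y rule: less_induct)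
  case less
  let ?N = "nf n \<alpha> \<beta> v"
  obtain X0 t0 Y0 where F: "findp (X @ pat t @ Y) = Some (X0, t0, Y0)" and
    D: "(X0 = X \<and> t0 = t \<and> Y0 = Y) \<or> (t0 = False \<and> t = True \<and> X = X0 @ [False] \<and> Y0 = True # Y)
    \<or> (\<exists>Z. X = X0 @ pat t0 @ Z \<and> Y0 = Z @ pat t @ Y)"
    using findp_occ[of X t Y] by blast
  from D consider (eq) "X0 = X" "t0 = t" "Y0 = Y"
    | (ov) "t0 = False" "t = True" "X = X0 @ [False]" "Y0 = True # Y"
    | (dj) Z where "X = X0 @ pat t0 @ Z" "Y0 = Z @ pat t @ Y" by blast
  then show ?case
  proof cases
    case eq then show ?thesis using F by (simp add: nf_Some)
  next
    case ov
    define w0 where "w0 = vert n v X0"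
    have w0n: "w0 < n" using vert_lt[OF n v] w0_def by simp
    have c: "ci n (vert n v X) t = (w0 + n - 1) mod n"
      using ov by (simp add: vert_append ci_def nxt_def w0_def)
    have c0: "ci n (vert n v X0) t0 = (w0 + n - 1) mod n"
      using ov by (simp add: ci_def w0_def)
    have c0': "ci n (vert n v X0) False = (w0 + n - 1) mod n"
      by (simp add: ci_def w0_def)
    have c1: "ci n (vert n v (X0 @ [True])) False = w0"
      using n w0n by (simp add: vert_append ci_def nxt_def w0_def[symmetric])
    have c2: "ci n (vert n v X0) True = w0" by (simp add: ci_def w0_def)
    have IH1: "?N ((X0 @ [True]) @ pat False @ Y) = (\<lambda>w. \<alpha> w0 * ?N ((X0 @ [True]) @ r1 False @ Y) w
                  + \<beta> w0 * ?N ((X0 @ [True]) @ r2 False @ Y) w)"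
      using less[of "X0 @ [True]" False Y] ov c1 by (simp add: invc_append pat_def r1_def r2_def)
    have IH2: "?N (X0 @ pat True @ (False # Y)) = (\<lambda>w. \<alpha> w0 * ?N (X0 @ r1 True @ (False # Y)) w
                  + \<beta> w0 * ?N (X0 @ r2 True @ (False # Y)) w)"
      using less[of X0 True "False # Y"] ov c2 by (simp add: invc_append pat_def r1_def r2_def)
    have e: "?N (X0 @ r2 False @ True # Y) = ?N (X @ r2 t @ Y)"
      using IH1 IH2 ov by (simp add: pat_def r1_def r2_def)
    have U: "?N (X @ pat t @ Y) = (\<lambda>w. \<alpha> ((w0 + n - 1) mod n) * ?N (X0 @ r1 False @ True # Y) w
                  + \<beta> ((w0 + n - 1) mod n) * ?N (X0 @ r2 False @ True # Y) w)"
      using nf_Some[OF F, where n=n and \<alpha>=\<alpha> and \<beta>=\<beta> and v=v] by (simp only: ov(1) ov(4) c0')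
    show ?thesis
      unfolding U e c using ov by (simp add: pat_def r1_def r2_def)
  next
    case dj
    define c0 where "c0 = ci n (vert n v X0) t0"
    define c where "c = ci n (vert n v X) t"
    have vX0: "vert n v X0 < n" using vert_lt[OF n v] by simp
    have cA: "ci n (vert n v (X0 @ r1 t0 @ Z)) t = c" "ci n (vert n v (X0 @ r2 t0 @ Z)) t = c"
      using dj vert_pat[OF n vX0, of t0] by (simp_all add: c_def vert_append)
    have A1: "?N (X0 @ r1 t0 @ Z @ pat t @ Y) = (\<lambda>w. \<alpha> c * ?N (X0 @ r1 t0 @ Z @ r1 t @ Y) w
                  + \<beta> c * ?N (X0 @ r1 t0 @ Z @ r2 t @ Y) w)"
      using less[of "X0 @ r1 t0 @ Z" t Y] dj cA invc_lt[of X0 t0 "Z @ pat t @ Y"] by simp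
    have A2: "?N (X0 @ r2 t0 @ Z @ pat t @ Y) = (\<lambda>w. \<alpha> c * ?N (X0 @ r2 t0 @ Z @ r1 t @ Y) w
                  + \<beta> c * ?N (X0 @ r2 t0 @ Z @ r2 t @ Y) w)"
      using less[of "X0 @ r2 t0 @ Z" t Y] dj cA invc_lt[of X0 t0 "Z @ pat t @ Y"] by simp
    have B1: "?N (X0 @ pat t0 @ Z @ r1 t @ Y) = (\<lambda>w. \<alpha> c0 * ?N (X0 @ r1 t0 @ Z @ r1 t @ Y) w
                  + \<beta> c0 * ?N (X0 @ r2 t0 @ Z @ r1 t @ Y) w)"
      using less[of X0 t0 "Z @ r1 t @ Y"] dj invc_lt[of "X0 @ pat t0 @ Z" t Y] by (simp add: c0_def)
    have B2: "?N (X0 @ pat t0 @ Z @ r2 t @ Y) = (\<lambda>w. \<alpha> c0 * ?N (X0 @ r1 t0 @ Z @ r2 t @ Y) w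
                  + \<beta> c0 * ?N (X0 @ r2 t0 @ Z @ r2 t @ Y) w)"
      using less[of X0 t0 "Z @ r2 t @ Y"] dj invc_lt[of "X0 @ pat t0 @ Z" t Y] by (simp add: c0_def)
    have U: "?N (X @ pat t @ Y) = (\<lambda>w. \<alpha> c0 * ?N (X0 @ r1 t0 @ Z @ pat t @ Y) w
                  + \<beta> c0 * ?N (X0 @ r2 t0 @ Z @ pat t @ Y) w)"
      using nf_Some[OF F] dj by (simp add: c0_def)
    show ?thesis
      unfolding U A1 A2 c_def[symmetric] using dj B1 B2 by (simp add: algebra_simps)
  qed
qed

end

interpretation fs: vector_space "fscale :: 'a::field \<Rightarrow> (path \<Rightarrow> 'a) \<Rightarrow> (path \<Rightarrow> 'a)"
  by unfold_locales (simp_all add: fscale_def fun_eq_iff algebra_simps)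

lemma fscale_apply[simp]: "fscale c f x = c * f x" by (simp add: fscale_def)

lemma pmult_pvec: "pmult n (pvec (v, c)) (pvec (w, d)) =
   (if walk_end n v c = w then pvec (v, c @ d) else (0 :: path \<Rightarrow> 'a::field))"
proof (rule ext, clarify)
  fix x cs
  have tm: "m \<le> length cs \<Longrightarrow> pvec (v, c) (x, take m cs) * pvec (w, d) (walk_end n x (take m cs), drop m cs)
     = (if m = length c then (if x = v \<and> take m cs = c \<and> walk_end n v c = w \<and> drop m cs = d then 1 else 0) else (0::'a))" for m
    by (auto simp: pvec_def)
  have "pmult n (pvec (v, c)) (pvec (w, d)) (x, cs) = (\<Sum>m\<le>length cs. (if m = length c then
      (if x = v \<and> take m cs = c \<and> walk_end n v c = w \<and> drop m cs = d then 1 else 0) else (0::'a)))"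
    unfolding pmult_def by (auto intro!: sum.cong simp: tm)
  also have "\<dots> = (if length c \<le> length cs \<and> x = v \<and> take (length c) cs = c \<and> walk_end n v c = w \<and> drop (length c) cs = d then 1 else 0)"
    by (simp add: sum.delta)
  also have "\<dots> = (if walk_end n v c = w then pvec (v, c @ d) else 0) (x, cs)"
    apply (auto simp: pvec_def append_eq_conv_conj)
    by (metis append_take_drop_id)
  finally show "pmult n (pvec (v, c)) (pvec (w, d)) (x, cs) = (if walk_end n v c = w then pvec (v, c @ d) else (0 :: path \<Rightarrow> 'a)) (x, cs)" .
qed

lemma pmult_diff_left: "pmult n (f - g) h = pmult n f h - pmult n g h"
  by (rule ext) (auto simp: pmult_def sum_subtractf left_diff_distrib split: prod.splits)
lemma pmult_diff_right: "pmult n f (g - h) = pmult n f g - pmult n f h"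
  by (rule ext) (auto simp: pmult_def sum_subtractf right_diff_distrib split: prod.splits)
lemma pmult_scale_left: "pmult n (fscale a f) h = fscale a (pmult n f h)"
  by (rule ext) (auto simp: pmult_def sum_distrib_left mult.assoc split: prod.splits)
lemma pmult_scale_right: "pmult n f (fscale a h) = fscale a (pmult n f h)"
  by (rule ext) (auto simp: pmult_def sum_distrib_left algebra_simps split: prod.splits)
lemma pmult_zero_left: "pmult n 0 h = 0"
  by (rule ext) (auto simp: pmult_def split: prod.splits)

definition lift :: "nat \<Rightarrow> nat \<Rightarrow> (bool list \<Rightarrow> 'a::field) \<Rightarrow> path \<Rightarrow> 'a" where
  "lift n v g = (\<lambda>(w, cs). if w = v \<and> cs = to_arr n v (map fst cs) then g (map fst cs) else 0)"

lemma lift_point: "lift n v (\<lambda>w. if w = bs then 1 else 0) = pvec (v, to_arr n v bs)"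
proof (rule ext)
  fix x :: path
  obtain w cs where x: "x = (w, cs)" by fastforce
  show "lift n v (\<lambda>w. if w = bs then 1 else 0) x = pvec (v, to_arr n v bs) x"
    by (cases "w = v \<and> cs = to_arr n v (map fst cs)") (auto simp: lift_def pvec_def x)
qed

lemma lift_lin: "lift n v (\<lambda>w. a * f w + b * g w) = fscale a (lift n v f) + fscale b (lift n v g)"
  by (rule ext) (auto simp: lift_def)

definition relw :: "nat \<Rightarrow> (nat \<Rightarrow> 'a::field) \<Rightarrow> (nat \<Rightarrow> 'a) \<Rightarrow> nat \<Rightarrow> bool \<Rightarrow> path \<Rightarrow> 'a" where
  "relw n \<alpha> \<beta> w t = pvec (w, to_arr n w (pat t)) - fscale (\<alpha> (ci n w t)) (pvec (w, to_arr n w (r1 t)))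
      - fscale (\<beta> (ci n w t)) (pvec (w, to_arr n w (r2 t)))"

lemma rels_relw: assumes n: "0 < n" and r: "r \<in> rels n \<alpha> \<beta>" shows "\<exists>w t. w < n \<and> r = relw n \<alpha> \<beta> w t"
proof -
  from r consider (a) i where "i < n" "r = rel1 n \<alpha> \<beta> i" | (b) i where "i < n" "r = rel2 n \<alpha> \<beta> i"
    unfolding rels_def by blast
  then show ?thesis
  proof cases
    case a
    have "r = relw n \<alpha> \<beta> i True"
      using a to_arr_rel1[OF n a(1)] by (simp add: relw_def rel1_def ci_def)
    then show ?thesis using a by blast
  next
    case b
    have "r = relw n \<alpha> \<beta> (Suc i mod n) False"
      using b n to_arr_rel2[OF n b(1)] m2[OF n b(1)] by (simp add: relw_def rel2_def ci_def)
    moreover have "Suc i mod n < n" using n by simp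
    ultimately show ?thesis by blast
  qed
qed

lemma relw_rels: assumes n: "0 < n" and w: "w < n" shows "relw n \<alpha> \<beta> w t \<in> rels n \<alpha> \<beta>"
proof (cases t)
  case True
  have "relw n \<alpha> \<beta> w t = rel1 n \<alpha> \<beta> w"
    using True to_arr_rel1[OF n w] by (simp add: relw_def rel1_def ci_def)
  then show ?thesis using w unfolding rels_def by blast
next
  case False
  define i where "i = (w + n - 1) mod n"
  have i: "i < n" using n by (simp add: i_def)
  have wi: "w = Suc i mod n" using m1[OF n w] by (simp add: i_def)
  have "relw n \<alpha> \<beta> w t = rel2 n \<alpha> \<beta> i"
    using False to_arr_rel2[OF n i] unfolding wi by (simp add: relw_def rel2_def ci_def m2'[OF n i])
  then show ?thesis using i unfolding rels_def by blast
qed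

definition gen :: "nat \<Rightarrow> (nat \<Rightarrow> 'a::field) \<Rightarrow> (nat \<Rightarrow> 'a) \<Rightarrow> nat \<Rightarrow> bool list \<Rightarrow> bool \<Rightarrow> bool list \<Rightarrow> path \<Rightarrow> 'a" where
  "gen n \<alpha> \<beta> v X t Y = pvec (v, to_arr n v (X @ pat t @ Y))
     - fscale (\<alpha> (ci n (vert n v X) t)) (pvec (v, to_arr n v (X @ r1 t @ Y)))
     - fscale (\<beta> (ci n (vert n v X) t)) (pvec (v, to_arr n v (X @ r2 t @ Y)))"

lemma gen_prod: assumes n: "0 < n" and w: "w < n"
  shows "pmult n (pmult n (pvec (v, to_arr n v X)) (relw n \<alpha> \<beta> w t)) (pvec (u, to_arr n u Y)) =
    (if vert n v X = w \<and> vert n w (pat t) = u then gen n \<alpha> \<beta> v X t Y else 0)"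
proof (cases "vert n v X = w")
  case False
  then show ?thesis
    by (simp add: relw_def pmult_diff_right pmult_scale_right pmult_pvec walk_end_to_arr pmult_zero_left)
next
  case True
  have inner: "pmult n (pvec (v, to_arr n v X)) (relw n \<alpha> \<beta> w t) =
     pvec (v, to_arr n v (X @ pat t)) - fscale (\<alpha> (ci n w t)) (pvec (v, to_arr n v (X @ r1 t)))
      - fscale (\<beta> (ci n w t)) (pvec (v, to_arr n v (X @ r2 t)))"
    using True by (simp add: relw_def pmult_diff_right pmult_scale_right pmult_pvec walk_end_to_arr to_arr_append)
  have vp: "vert n v (X @ r1 t) = vert n w (pat t)" "vert n v (X @ r2 t) = vert n w (pat t)"
    "vert n v (X @ pat t) = vert n w (pat t)"
    using True vert_pat[OF n w, of t] by (simp_all add: vert_append)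
  show ?thesis
  proof (cases "vert n w (pat t) = u")
    case False
    then show ?thesis unfolding inner pmult_diff_left pmult_scale_left pmult_pvec walk_end_to_arr vp
      by (simp add: pmult_zero_left)
  next
    case u: True
    have e1: "to_arr n v (X @ pat t) @ to_arr n u Y = to_arr n v (X @ pat t @ Y)"
      "to_arr n v (X @ r1 t) @ to_arr n u Y = to_arr n v (X @ r1 t @ Y)"
      "to_arr n v (X @ r2 t) @ to_arr n u Y = to_arr n v (X @ r2 t @ Y)"
      using to_arr_append[of n v "X @ pat t" Y] to_arr_append[of n v "X @ r1 t" Y]
        to_arr_append[of n v "X @ r2 t" Y] vp u by simp_all
    show ?thesis unfolding inner pmult_diff_left pmult_scale_left pmult_pvec walk_end_to_arr vp
      using u True by (simp add: e1 gen_def)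
  qed
qed

definition gens :: "nat \<Rightarrow> (nat \<Rightarrow> 'a::field) \<Rightarrow> (nat \<Rightarrow> 'a) \<Rightarrow> (path \<Rightarrow> 'a) set" where
  "gens n \<alpha> \<beta> = {pmult n (pmult n (pvec p) r) (pvec q) | p r q.
        valid_path n p \<and> valid_path n q \<and> r \<in> rels n \<alpha> \<beta>}"

lemma rel_ideal_gens: "rel_ideal n \<alpha> \<beta> = fs.span (gens n \<alpha> \<beta>)"
  by (simp add: rel_ideal_def gens_def)

lemma gens_cases: assumes n: "0 < n" and g: "g \<in> gens n \<alpha> \<beta>"
  shows "g = 0 \<or> (\<exists>v X t Y. v < n \<and> g = gen n \<alpha> \<beta> v X t Y)"
proof -
  from g obtain p r q where g: "g = pmult n (pmult n (pvec p) r) (pvec q)" and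
    p: "valid_path n p" and q: "valid_path n q" and r: "r \<in> rels n \<alpha> \<beta>"
    unfolding gens_def by blast
  obtain v cs where pv: "p = (v, cs)" by fastforce
  obtain u ds where qu: "q = (u, ds)" by fastforce
  have v: "v < n" and cs: "cs = to_arr n v (map fst cs)" using p n by (auto simp: pv valid_path_iff)
  have ds: "ds = to_arr n u (map fst ds)" using q n by (auto simp: qu valid_path_iff)
  obtain w t where w: "w < n" and rw: "r = relw n \<alpha> \<beta> w t" using rels_relw[OF n r] by blast
  have "g = (if vert n v (map fst cs) = w \<and> vert n w (pat t) = u then gen n \<alpha> \<beta> v (map fst cs) t (map fst ds) else 0)"
    unfolding g pv qu rw using gen_prod[OF n w, of v "map fst cs" \<alpha> \<beta> t u "map fst ds"] cs ds by simp
  then show ?thesis using v by auto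
qed

lemma gen_in_ideal: assumes n: "0 < n" and v: "v < n"
  shows "gen n \<alpha> \<beta> v X t Y \<in> rel_ideal n \<alpha> \<beta>"
proof -
  have w: "vert n v X < n" using vert_lt[OF n v] .
  have u: "vert n (vert n v X) (pat t) < n" using vert_lt[OF n w] .
  have "gen n \<alpha> \<beta> v X t Y = pmult n (pmult n (pvec (v, to_arr n v X)) (relw n \<alpha> \<beta> (vert n v X) t))
      (pvec (vert n (vert n v X) (pat t), to_arr n (vert n (vert n v X) (pat t)) Y))"
    using gen_prod[OF n w, where v=v and X=X and \<alpha>=\<alpha> and \<beta>=\<beta> and t=t and u="vert n (vert n v X) (pat t)" and Y=Y] by simp
  moreover have "\<dots> \<in> gens n \<alpha> \<beta>"
  proof -
    have p: "valid_path n (v, to_arr n v X)" using n v by (simp add: valid_path_iff)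
    have q: "valid_path n (vert n (vert n v X) (pat t), to_arr n (vert n (vert n v X) (pat t)) Y)"
      using n u by (simp add: valid_path_iff)
    show ?thesis unfolding gens_def using p q relw_rels[OF n w] by blast
  qed
  ultimately show ?thesis unfolding rel_ideal_gens using fs.span_base by metis
qed

lemma span_nf: "0 < n \<Longrightarrow> v < n \<Longrightarrow> pvec (v, to_arr n v bs) - lift n v (nf n \<alpha> \<beta> v bs) \<in> rel_ideal n \<alpha> \<beta>"
proof (induction n \<alpha> \<beta> v bs rule: nf.induct)
  case (1 n \<alpha> \<beta> v bs)
  show ?case
  proof (cases "findp bs")
    case None
    then have "pvec (v, to_arr n v bs) - lift n v (nf n \<alpha> \<beta> v bs) = 0" by (simp add: nf_None lift_point)
    then show ?thesis by (metis fs.span_zero rel_ideal_gens)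
  next
    case (Some a)
    then obtain X t Y where F: "findp bs = Some (X, t, Y)" by (cases a) auto
    have bs: "bs = X @ pat t @ Y" using findp_Some[OF F] .
    define a where "a = \<alpha> (ci n (vert n v X) t)"
    define b where "b = \<beta> (ci n (vert n v X) t)"
    have I1: "pvec (v, to_arr n v (X @ r1 t @ Y)) - lift n v (nf n \<alpha> \<beta> v (X @ r1 t @ Y)) \<in> rel_ideal n \<alpha> \<beta>"
      using 1(1)[OF F refl refl] 1(3,4) by blast
    have I2: "pvec (v, to_arr n v (X @ r2 t @ Y)) - lift n v (nf n \<alpha> \<beta> v (X @ r2 t @ Y)) \<in> rel_ideal n \<alpha> \<beta>"
      using 1(2)[OF F refl refl] 1(3,4) by blast
    have G: "gen n \<alpha> \<beta> v X t Y \<in> rel_ideal n \<alpha> \<beta>" using gen_in_ideal 1(3,4) by blast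
    have eq: "pvec (v, to_arr n v bs) - lift n v (nf n \<alpha> \<beta> v bs) =
       gen n \<alpha> \<beta> v X t Y + fscale a (pvec (v, to_arr n v (X @ r1 t @ Y)) - lift n v (nf n \<alpha> \<beta> v (X @ r1 t @ Y)))
        + fscale b (pvec (v, to_arr n v (X @ r2 t @ Y)) - lift n v (nf n \<alpha> \<beta> v (X @ r2 t @ Y)))"
      unfolding nf_Some[OF F] lift_lin a_def[symmetric] b_def[symmetric]
      by (simp add: gen_def bs a_def b_def fun_eq_iff algebra_simps)
    show ?thesis
      unfolding eq rel_ideal_gens
      using G I1 I2 unfolding rel_ideal_gens
      by (intro fs.span_add fs.span_scale) auto
  qed
qed

lemma vert_count: "0 < n \<Longrightarrow> v < n \<Longrightarrow> vert n v bs = (v + cT bs + (n - 1) * (length bs - cT bs)) mod n"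
proof (induction bs arbitrary: v)
  case Nil then show ?case by simp
next
  case (Cons b bs)
  have le: "cT bs \<le> length bs" by (rule length_filter_le)
  have IH: "vert n (nxt n v b) bs = (nxt n v b + cT bs + (n - 1) * (length bs - cT bs)) mod n"
    using Cons.IH[of "nxt n v b"] nxt_lt[OF Cons.prems(1)] by simp
  show ?case
  proof (cases b)
    case True
    have e: "(Suc v mod n + A + B) mod n = Suc (v + A + B) mod n" for A B
    proof -
      have "(Suc v mod n + A + B) mod n = (Suc v mod n + (A + B)) mod n" by (simp only: add.assoc)
      also have "\<dots> = (Suc v + (A + B)) mod n" by (rule mod_add_left_eq)
      finally show ?thesis by (simp add: add.assoc)
    qed
    have "vert n v (b # bs) = (Suc v mod n + cT bs + (n - 1) * (length bs - cT bs)) mod n"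
      using IH True by (simp add: nxt_def)
    also have "\<dots> = Suc (v + cT bs + (n - 1) * (length bs - cT bs)) mod n" by (rule e)
    finally show ?thesis using True by simp
  next
    case False
    have e: "Suc (length bs) - cT bs = Suc (length bs - cT bs)" using le by (metis Suc_diff_le)
    have "vert n v (b # bs) = ((v + n - 1) mod n + cT bs + (n - 1) * (length bs - cT bs)) mod n"
      using IH False by (simp add: nxt_def)
    also have "\<dots> = ((v + n - 1) mod n + (cT bs + (n - 1) * (length bs - cT bs))) mod n"
      by (simp only: add.assoc)
    also have "\<dots> = ((v + n - 1) + (cT bs + (n - 1) * (length bs - cT bs))) mod n"
      by (rule mod_add_left_eq)
    also have "\<dots> = (v + n - 1 + cT bs + (n - 1) * (length bs - cT bs)) mod n"
      by (simp only: add.assoc)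
    also have "\<dots> = (v + cT (b # bs) + (n - 1) * (length (b # bs) - cT (b # bs))) mod n"
      using False Cons.prems(1) e by (simp add: algebra_simps)
    finally show ?thesis .
  qed
qed

lemma vert_eq: "0 < n \<Longrightarrow> v < n \<Longrightarrow> length a = length b \<Longrightarrow> cT a = cT b \<Longrightarrow> vert n v a = vert n v b"
  using vert_count by metis

context
  fixes n :: nat and \<alpha> \<beta> :: "nat \<Rightarrow> 'a::field" and k i j :: nat
  assumes n: "0 < n" and i: "i < n"
begin

definition "Sp = paths_of n k i j"
definition Lp :: "path \<Rightarrow> path \<Rightarrow> 'a" where
  "Lp p = lift n (fst p) (nf n \<alpha> \<beta> (fst p) (map fst (snd p)))"
definition Psi :: "(path \<Rightarrow> 'a) \<Rightarrow> path \<Rightarrow> 'a" where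
  "Psi f = (\<lambda>x. \<Sum>p\<in>Sp. f p * Lp p x)"

lemma finS: "finite Sp" unfolding Sp_def using finite_paths_of[OF n] .

lemma Psi_pvec: "Psi (pvec P) = (if P \<in> Sp then Lp P else 0)"
proof (rule ext)
  fix x
  have "Psi (pvec P) x = (\<Sum>p\<in>Sp. if P = p then Lp p x else 0)"
    unfolding Psi_def by (intro sum.cong) (auto simp: pvec_def)
  also have "\<dots> = (if P \<in> Sp then Lp P else 0) x" using finS by (simp add: sum.delta)
  finally show "Psi (pvec P) x = (if P \<in> Sp then Lp P else 0) x" .
qed

lemma Psi_diff: "Psi (f - g) = Psi f - Psi g"
  by (rule ext) (simp add: Psi_def sum_subtractf left_diff_distrib)
lemma Psi_add: "Psi (f + g) = Psi f + Psi g"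
  by (rule ext) (simp add: Psi_def sum.distrib distrib_right)
lemma Psi_scale: "Psi (fscale c f) = fscale c (Psi f)"
  by (rule ext) (simp add: Psi_def sum_distrib_left mult.assoc)
lemma Psi_zero: "Psi 0 = 0"
  by (rule ext) (simp add: Psi_def)

lemma Lp_path: "Lp (v, to_arr n v bs) = lift n v (nf n \<alpha> \<beta> v bs)"
  by (simp add: Lp_def)

lemma Psi_gen: assumes v: "v < n" shows "Psi (gen n \<alpha> \<beta> v X t Y) = 0"
proof -
  let ?P1 = "(v, to_arr n v (X @ pat t @ Y))"
  let ?P2 = "(v, to_arr n v (X @ r1 t @ Y))"
  let ?P3 = "(v, to_arr n v (X @ r2 t @ Y))"
  have w: "vert n v X < n" using vert_lt[OF n v] .
  have vv: "vert n v (X @ r1 t @ Y) = vert n v (X @ pat t @ Y)" "vert n v (X @ r2 t @ Y) = vert n v (X @ pat t @ Y)"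
    using vert_pat[OF n w, of t] by (simp_all add: vert_append)
  have ll: "length (X @ r1 t @ Y) = length (X @ pat t @ Y)" "length (X @ r2 t @ Y) = length (X @ pat t @ Y)"
    using counts_pat[of t] by simp_all
  have mem: "?P2 \<in> Sp \<longleftrightarrow> ?P1 \<in> Sp" "?P3 \<in> Sp \<longleftrightarrow> ?P1 \<in> Sp"
    unfolding Sp_def mem_paths_of[OF n] using vv ll by simp_all
  have L: "Lp ?P1 = fscale (\<alpha> (ci n (vert n v X) t)) (Lp ?P2) + fscale (\<beta> (ci n (vert n v X) t)) (Lp ?P3)"
    unfolding Lp_path nf_occ[OF n v] lift_lin ..
  show ?thesis
    unfolding gen_def Psi_diff Psi_scale Psi_pvec mem L
    by (rule ext) (simp add: algebra_simps)
qed

lemma Psi_ideal: assumes f: "f \<in> rel_ideal n \<alpha> \<beta>" shows "Psi f = 0"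
proof -
  have sub: "fs.subspace {f. Psi f = 0}"
    by (rule fs.subspaceI) (auto simp: Psi_zero Psi_add Psi_scale)
  have "\<And>g. g \<in> gens n \<alpha> \<beta> \<Longrightarrow> Psi g = 0"
    using gens_cases[OF n] Psi_gen Psi_zero by blast
  then show ?thesis
    using fs.span_induct[of f "gens n \<alpha> \<beta>" "\<lambda>f. Psi f = 0"] f sub unfolding rel_ideal_gens by simp
qed

lemma Lp_supp: assumes p: "p \<in> Sp" and x: "Lp p x \<noteq> 0"
  shows "x \<in> Sp \<and> findp (map fst (snd x)) = None"
proof -
  have p': "p = (i, to_arr n i (map fst (snd p)))" "length (map fst (snd p)) = k" "vert n i (map fst (snd p)) = j"
    using paths_of_ex[OF n] p unfolding Sp_def by blast+
  obtain w cs where xw: "x = (w, cs)" by fastforce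
  have L: "Lp p x = lift n i (nf n \<alpha> \<beta> i (map fst (snd p))) x"
    by (subst p'(1)) (simp only: Lp_path)
  from x have c: "w = i" "cs = to_arr n i (map fst cs)" "nf n \<alpha> \<beta> i (map fst (snd p)) (map fst cs) \<noteq> 0"
    unfolding L by (auto simp: lift_def xw split: if_splits)
  from nf_supp[OF c(3)] have s: "findp (map fst cs) = None" "length (map fst cs) = length (map fst (snd p))"
    "cT (map fst cs) = cT (map fst (snd p))" by auto
  have "vert n i (map fst cs) = j" using vert_eq[OF n i s(2,3)] p'(3) by simp
  then have "x \<in> Sp" unfolding Sp_def xw c(1) using c(2) mem_paths_of[OF n, of i "map fst cs" k i j] s(2) p'(2) i
    by simp
  then show ?thesis using s(1) xw by simp
qed

lemma Lp_normal: assumes p: "p \<in> Sp" and nm: "findp (map fst (snd p)) = None" shows "Lp p = pvec p"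
proof -
  have p': "p = (i, to_arr n i (map fst (snd p)))"
    using paths_of_ex[OF n] p unfolding Sp_def by blast
  show ?thesis by (subst (1 2) p') (simp only: Lp_path nf_None[OF nm] lift_point)
qed

lemma Lp_ideal: assumes p: "p \<in> Sp" shows "pvec p - Lp p \<in> rel_ideal n \<alpha> \<beta>"
proof -
  have p': "p = (i, to_arr n i (map fst (snd p)))"
    using paths_of_ex[OF n] p unfolding Sp_def by blast
  show ?thesis by (subst (1 2) p') (simp only: Lp_path span_nf[OF n i])
qed

definition "Cs = (comp_space n k i j :: (path \<Rightarrow> 'a) set)"

lemma Cs_iff: "f \<in> Cs \<longleftrightarrow> (\<forall>p. p \<notin> Sp \<longrightarrow> f p = 0)"
  unfolding Cs_def comp_space_def Sp_def by auto

lemma sub_Cs: "fs.subspace Cs"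
  by (rule fs.subspaceI) (auto simp: Cs_iff)

lemma expand: "f \<in> Cs \<Longrightarrow> f = (\<Sum>p\<in>Sp. fscale (f p) (pvec p))"
proof (rule ext)
  fix x assume f: "f \<in> Cs"
  have "(\<Sum>p\<in>Sp. fscale (f p) (pvec p)) x = (\<Sum>p\<in>Sp. if x = p then f x else 0)"
    unfolding sum_fun_app by (intro sum.cong) (auto simp: pvec_def)
  also have "\<dots> = f x"
  proof -
    have "x \<notin> Sp \<Longrightarrow> f x = 0" using f Cs_iff by blast
    then show ?thesis using finS by (simp add: sum.delta)
  qed
  finally show "f x = (\<Sum>p\<in>Sp. fscale (f p) (pvec p)) x" by simp
qed

lemma pvec_inj: "inj (pvec :: path \<Rightarrow> path \<Rightarrow> 'a)"
  by (rule injI) (metis pvec_def zero_neq_one)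

lemma dim_Cs: "fs.dim Cs = card Sp"
proof -
  have span: "fs.span (pvec ` Sp) = Cs"
  proof
    show "fs.span (pvec ` Sp) \<subseteq> Cs"
      by (rule fs.span_minimal[OF _ sub_Cs]) (auto simp: Cs_iff pvec_def)
    show "Cs \<subseteq> fs.span (pvec ` Sp)"
    proof
      fix f assume f: "f \<in> Cs"
      show "f \<in> fs.span (pvec ` Sp)"
        by (subst expand[OF f]) (intro fs.span_sum fs.span_scale fs.span_base; auto)
    qed
  qed
  have ind: "fs.independent (pvec ` Sp :: (path \<Rightarrow> 'a) set)"
  proof (rule fs.independent_if_scalars_zero)
    show "finite (pvec ` Sp :: (path \<Rightarrow> 'a) set)" using finS by simp
  next
    fix u :: "(path \<Rightarrow> 'a) \<Rightarrow> 'a" and x :: "path \<Rightarrow> 'a"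
    assume s: "(\<Sum>x\<in>pvec ` Sp. fscale (u x) x) = 0" and x: "x \<in> pvec ` Sp"
    have injp: "inj_on (pvec :: path \<Rightarrow> path \<Rightarrow> 'a) Sp" by (rule inj_on_subset[OF pvec_inj subset_UNIV])
    obtain q where q: "q \<in> Sp" "x = pvec q" using x by auto
    have "0 = (\<Sum>x\<in>pvec ` Sp. fscale (u x) x) q" using s by simp
    also have "\<dots> = (\<Sum>p\<in>Sp. u (pvec p) * pvec p q)"
      unfolding sum_fun_app by (subst sum.reindex[OF injp]) auto
    also have "\<dots> = (\<Sum>p\<in>Sp. if q = p then u (pvec p) else 0)"
      by (intro sum.cong) (auto simp: pvec_def)
    also have "\<dots> = u x" using q finS by simp
    finally show "u x = 0" by simp
  qed
  have "fs.dim Cs = card (pvec ` Sp :: (path \<Rightarrow> 'a) set)"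
  proof -
    have e: "fs.span Cs = Cs" by (rule fs.span_subspace[OF subset_refl fs.span_superset sub_Cs])
    have "fs.span (pvec ` Sp) = fs.span Cs" unfolding e by (rule span)
    then show ?thesis by (rule fs.dim_eq_card[OF _ ind])
  qed
  also have "\<dots> = card Sp" by (rule card_image) (auto intro: inj_on_subset[OF pvec_inj])
  finally show ?thesis .
qed

definition "Nm = {p \<in> Sp. findp (map fst (snd p)) = None}"
definition bvec :: "path \<Rightarrow> path \<Rightarrow> 'a" where "bvec p = pvec p - Lp p"

lemma bvec_self: "p \<in> Sp - Nm \<Longrightarrow> q \<in> Sp - Nm \<Longrightarrow> bvec p q = (if q = p then 1 else 0)"
proof -
  assume p: "p \<in> Sp - Nm" and q: "q \<in> Sp - Nm"
  have "Lp p q = 0"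
  proof (rule ccontr)
    assume "Lp p q \<noteq> 0"
    then have "findp (map fst (snd q)) = None" using Lp_supp[of p q] p by blast
    then show False using q unfolding Nm_def by blast
  qed
  then show ?thesis by (simp add: bvec_def pvec_def)
qed

lemma dim_V: "fs.dim (rel_ideal n \<alpha> \<beta> \<inter> Cs) = card (Sp - Nm)"
proof -
  let ?V = "rel_ideal n \<alpha> \<beta> \<inter> Cs"
  let ?B = "bvec ` (Sp - Nm)"
  have subV: "fs.subspace ?V"
    by (rule fs.subspace_inter) (auto simp: rel_ideal_gens sub_Cs)
  have injb: "inj_on bvec (Sp - Nm)"
  proof (rule inj_onI)
    fix p q assume p: "p \<in> Sp - Nm" and q: "q \<in> Sp - Nm" and e: "bvec p = bvec q"
    have "bvec p p = 1" using bvec_self[OF p p] by simp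
    then have "bvec q p = 1" using e by simp
    then show "p = q" using bvec_self[OF q p] by (auto split: if_splits)
  qed
  have LC: "p \<in> Sp \<Longrightarrow> Lp p \<in> Cs" for p using Lp_supp unfolding Cs_iff by blast
  have BV: "?B \<subseteq> ?V"
  proof
    fix b assume "b \<in> ?B"
    then obtain p where p: "p \<in> Sp - Nm" "b = bvec p" by auto
    have "pvec p \<in> Cs" using p unfolding Cs_iff by (auto simp: pvec_def)
    then have "b \<in> Cs" using LC[of p] p fs.subspace_diff[OF sub_Cs] by (simp add: bvec_def)
    moreover have "b \<in> rel_ideal n \<alpha> \<beta>" using Lp_ideal[of p] p by (simp add: bvec_def)
    ultimately show "b \<in> ?V" by simp
  qed
  have VB: "?V \<subseteq> fs.span ?B"
  proof
    fix f assume f: "f \<in> ?V"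
    have P0: "Psi f = 0" using Psi_ideal f by simp
    have fe: "f = (\<Sum>p\<in>Sp. fscale (f p) (pvec p))" using expand f by simp
    have Pe: "Psi f = (\<Sum>p\<in>Sp. fscale (f p) (Lp p))"
      by (rule ext) (simp add: Psi_def sum_fun_app)
    have "f = f - Psi f" using P0 by simp
    also have "\<dots> = (\<Sum>p\<in>Sp. fscale (f p) (bvec p))"
      by (subst (1) fe, subst Pe) (simp add: bvec_def sum_subtractf[symmetric] fun_eq_iff algebra_simps sum_fun_app)
    also have "\<dots> = (\<Sum>p\<in>Sp - Nm. fscale (f p) (bvec p))"
    proof (rule sum.mono_neutral_right[OF finS])
      show "Sp - Nm \<subseteq> Sp" by blast
      show "\<forall>p\<in>Sp - (Sp - Nm). fscale (f p) (bvec p) = 0"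
        using Lp_normal unfolding Nm_def bvec_def by (auto simp: fun_eq_iff)
    qed
    also have "\<dots> \<in> fs.span ?B"
      by (intro fs.span_sum fs.span_scale fs.span_base) auto
    finally show "f \<in> fs.span ?B" .
  qed
  have span: "fs.span ?B = fs.span ?V"
  proof (rule subset_antisym)
    show "fs.span ?B \<subseteq> fs.span ?V" using BV by (rule fs.span_mono)
    show "fs.span ?V \<subseteq> fs.span ?B" by (rule fs.span_minimal[OF VB fs.subspace_span])
  qed
  have ind: "fs.independent ?B"
  proof (rule fs.independent_if_scalars_zero)
    show "finite ?B" using finS by simp
  next
    fix u :: "(path \<Rightarrow> 'a) \<Rightarrow> 'a" and x :: "path \<Rightarrow> 'a"
    assume s: "(\<Sum>x\<in>?B. fscale (u x) x) = 0" and x: "x \<in> ?B"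
    then obtain q where q: "q \<in> Sp - Nm" "x = bvec q" by auto
    have "0 = (\<Sum>x\<in>?B. fscale (u x) x) q" using s by simp
    also have "\<dots> = (\<Sum>p\<in>Sp - Nm. u (bvec p) * bvec p q)"
      unfolding sum_fun_app by (subst sum.reindex[OF injb]) auto
    also have "\<dots> = (\<Sum>p\<in>Sp - Nm. if q = p then u (bvec p) else 0)"
    proof (intro sum.cong refl)
      fix p assume "p \<in> Sp - Nm"
      then show "u (bvec p) * bvec p q = (if q = p then u (bvec p) else 0)"
        using bvec_self[of p q] q(1) by auto
    qed
    also have "\<dots> = u x" using q finS by simp
    finally show "u x = 0" by simp
  qed
  have "fs.dim ?V = card ?B" using fs.dim_eq_card[OF span ind] .
  also have "\<dots> = card (Sp - Nm)" using card_image[OF injb] .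
  finally show ?thesis .
qed

lemma hdim_Nm: "hdim n \<alpha> \<beta> k i j = card Nm"
proof -
  have "hdim n \<alpha> \<beta> k i j = card Sp - card (Sp - Nm)"
    using dim_Cs dim_V unfolding hdim_def Cs_def by simp
  also have "\<dots> = card Nm"
    using finS by (simp add: card_Diff_subset Nm_def finite_subset card_mono diff_diff_cancel)
  finally show ?thesis .
qed

lemma hdim_words: "hdim n \<alpha> \<beta> k i j = card {bs. length bs = k \<and> findp bs = None \<and> vert n i bs = j}"
proof -
  let ?W = "{bs. length bs = k \<and> findp bs = None \<and> vert n i bs = j}"
  have NW: "Nm = (\<lambda>bs. (i, to_arr n i bs)) ` ?W"
  proof
    show "Nm \<subseteq> (\<lambda>bs. (i, to_arr n i bs)) ` ?W"
    proof
      fix p assume p: "p \<in> Nm"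
      then have p': "p = (i, to_arr n i (map fst (snd p)))" "length (map fst (snd p)) = k" "vert n i (map fst (snd p)) = j"
        using paths_of_ex[OF n] unfolding Nm_def Sp_def by blast+
      show "p \<in> (\<lambda>bs. (i, to_arr n i bs)) ` ?W"
        using p p' unfolding Nm_def by (intro image_eqI[where x = "map fst (snd p)"]) auto
    qed
    show "(\<lambda>bs. (i, to_arr n i bs)) ` ?W \<subseteq> Nm"
      unfolding Nm_def Sp_def using mem_paths_of[OF n] i by auto
  qed
  have inj: "inj_on (\<lambda>bs. (i, to_arr n i bs)) ?W"
  proof (rule inj_onI)
    fix a b assume "(i, to_arr n i a) = (i, to_arr n i b)"
    then have "map fst (to_arr n i a) = map fst (to_arr n i b)" by simp
    then show "a = b" by simp
  qed
  have "card Nm = card ?W" unfolding NW by (rule card_image[OF inj])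
  then show ?thesis using hdim_Nm by simp
qed

end

definition word :: "nat \<Rightarrow> nat \<Rightarrow> nat \<Rightarrow> bool list" where
  "word a m b = replicate a True @ concat (replicate m [False, True]) @ replicate b False"

lemma findp_True: "findp (True # r) = map_option (\<lambda>(X, t, Y). (True # X, t, Y)) (findp r)"
  by (rule findp_E) (simp_all add: pat_def)

lemma findp_Falses: "findp (replicate b False) = None"
proof (induction b)
  case 0 then show ?case by simp
next
  case (Suc b)
  have h: "set (take 3 (False # replicate b False)) \<subseteq> {False}"
    using set_take_subset[of 3 "replicate (Suc b) False"] by auto
  have "take 3 (False # replicate b False) \<noteq> pat t" for t
  proof
    assume e: "take 3 (False # replicate b False) = pat t"
    have p: "True \<in> set (pat t)" by (cases t) (simp_all add: pat_def)
    have "True \<in> set (take 3 (False # replicate b False))" unfolding e by (rule p)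
    then show False using h by blast
  qed
  then show ?case using findp_E[of False "replicate b False"] Suc by simp
qed

lemma findp_FT: "findp (concat (replicate m [False, True]) @ replicate b False) = None"
proof (induction m)
  case 0 then show ?case by (simp add: findp_Falses)
next
  case (Suc m)
  let ?R = "concat (replicate m [False, True]) @ replicate b False"
  have t1: "take 1 ?R \<noteq> [True]" by (cases m; cases b) auto
  have a: "take 3 (False # True # ?R) \<noteq> pat True"
    using t1 by (simp add: pat_def numeral_3_eq_3)
  have b: "take 3 (False # True # ?R) \<noteq> pat False"
    by (simp add: pat_def numeral_3_eq_3)
  have "findp (False # True # ?R) = map_option (\<lambda>(X, t, Y). (False # X, t, Y)) (findp (True # ?R))"
    using findp_E[OF a b] .
  then show ?case using Suc findp_True[of ?R] by simp
qed

lemma findp_word: "findp (word a m b) = None"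
  by (induction a) (simp_all add: word_def findp_True findp_FT)

lemma normal_word: "findp bs = None \<Longrightarrow> \<exists>a m b. bs = word a m b"
proof (induction bs)
  case Nil
  have "[] = word 0 0 0" by (simp add: word_def)
  then show ?case by blast
next
  case (Cons c r)
  have nT: "take 3 (c # r) \<noteq> pat True"
  proof
    assume "take 3 (c # r) = pat True"
    then show False using findp_T Cons.prems by simp
  qed
  have nF: "take 3 (c # r) \<noteq> pat False"
  proof
    assume "take 3 (c # r) = pat False"
    then show False using findp_F Cons.prems by simp
  qed
  have "findp r = None" using findp_E[OF nT nF] Cons.prems by simp
  then obtain a m b where r: "r = word a m b" using Cons.IH by blast
  show ?case
  proof (cases c)
    case True
    then have "c # r = word (Suc a) m b" by (simp add: r word_def)
    then show ?thesis by blast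
  next
    case False
    have "a = 0 \<or> a = 1 \<or> (\<exists>a'. a = Suc (Suc a'))" by presburger
    then consider (z) "a = 0" | (o) "a = 1" | (t) a' where "a = Suc (Suc a')" by blast
    then show ?thesis
    proof cases
      case z
      show ?thesis
      proof (cases m)
        case 0
        then have "c # r = word 0 0 (Suc b)" using False z by (simp add: r word_def)
        then show ?thesis by blast
      next
        case (Suc m')
        then have "take 3 (c # r) = pat False" using False z by (simp add: r word_def pat_def numeral_3_eq_3)
        then show ?thesis using nF by simp
      qed
    next
      case o
      then have "c # r = word 0 (Suc m) b" using False by (simp add: r word_def)
      then show ?thesis by blast
    next
      case t
      then have "take 3 (c # r) = pat True" using False by (simp add: r word_def pat_def numeral_3_eq_3)
      then show ?thesis using nT by simp
    qed
  qed
qed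

lemma cT_FT: "cT (concat (replicate m [False, True])) = m"
  by (induction m) auto

lemma len_FT: "length (concat (replicate m [False, True])) = 2 * m"
  by (induction m) auto

lemma cT_word: "cT (word a m b) = a + m"
  by (simp add: word_def cT_FT)

lemma length_word: "length (word a m b) = a + 2 * m + b"
  by (simp add: word_def len_FT)

lemma takeWhile_word: "takeWhile (\<lambda>x. x) (word a m b) = replicate a True"
proof -
  have "takeWhile (\<lambda>x. x) (concat (replicate m [False, True]) @ replicate b False) = []"
    by (cases m; cases b) auto
  then show ?thesis unfolding word_def by (subst takeWhile_append2) auto
qed

lemma word_inj: "word a m b = word a' m' b' \<Longrightarrow> a = a' \<and> m = m' \<and> b = b'"
proof -
  assume e: "word a m b = word a' m' b'"
  have "replicate a True = replicate a' True" using takeWhile_word[of a m b] takeWhile_word[of a' m' b'] e by simp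
  then have "length (replicate a True) = length (replicate a' True)" by (rule arg_cong)
  then have a: "a = a'" by simp
  have "a + m = a' + m'" using cT_word[of a m b] cT_word[of a' m' b'] e by simp
  then have m: "m = m'" using a by simp
  have "a + 2 * m + b = a' + 2 * m' + b'" using length_word[of a m b] length_word[of a' m' b'] e by simp
  then show ?thesis using a m by simp
qed

lemma vert_word: assumes n: "0 < n" and i: "i < n"
  shows "int (vert n i (word a m b)) = (int i + int a - int b) mod int n"
proof -
  have "vert n i (word a m b) = (i + (a + m) + (n - 1) * (m + b)) mod n"
    using vert_count[OF n i, of "word a m b"] by (simp add: cT_word length_word)
  then have "int (vert n i (word a m b)) = int (i + (a + m) + (n - 1) * (m + b)) mod int n"
    by (simp add: zmod_int)
  also have "int (i + (a + m) + (n - 1) * (m + b)) = (int i + int a - int b) + int n * int (m + b)"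
  proof -
    have e: "i + (a + m) + (n - 1) * (m + b) + b = i + a + n * (m + b)"
      using n by (cases n) (auto simp: algebra_simps)
    have "int (i + (a + m) + (n - 1) * (m + b)) + int b = int (i + a + n * (m + b))"
      by (subst e[symmetric]) simp
    then show ?thesis by simp
  qed
  also have "((int i + int a - int b) + int n * int (m + b)) mod int n = (int i + int a - int b) mod int n"
    by simp
  finally show ?thesis .
qed

definition Pc :: "nat \<Rightarrow> nat \<Rightarrow> nat \<Rightarrow> nat \<Rightarrow> int" where
  "Pc n k i j = (\<Sum>a\<le>k. if (int i + 2 * int a - int k) mod int n = int j then 1 else 0)"

definition Fc :: "nat \<Rightarrow> nat \<Rightarrow> nat \<Rightarrow> nat \<Rightarrow> int" where
  "Fc n k i j = (\<Sum>m\<le>k div 2. Pc n (k - 2 * m) i j)"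

lemma card_words: assumes n: "0 < n" and i: "i < n"
  shows "int (card {bs. length bs = k \<and> findp bs = None \<and> vert n i bs = j}) = Fc n k i j"
proof -
  let ?W = "{bs. length bs = k \<and> findp bs = None \<and> vert n i bs = j}"
  define cond where "cond m a \<longleftrightarrow> (int i + 2 * int a - int (k - 2 * m)) mod int n = int j" for m a
  let ?T = "{(m, a). 2 * m + a \<le> k \<and> cond m a}"
  let ?f = "\<lambda>(m, a). word a m (k - 2 * m - a)"
  have W: "?W = ?f ` ?T"
  proof
    show "?W \<subseteq> ?f ` ?T"
    proof
      fix bs assume bs: "bs \<in> ?W"
      have "findp bs = None" using bs by simp
      from normal_word[OF this] obtain a m b where w: "bs = word a m b" by blast
      have l: "a + 2 * m + b = k" using bs w length_word by simp
      have A: "int j = (int i + int a - int b) mod int n" using bs w vert_word[OF n i] by auto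
      have B: "int i + 2 * int a - int (k - 2 * m) = int i + int a - int b"
        using l by (simp add: of_nat_diff)
      have c: "cond m a" unfolding cond_def by (subst B) (rule A[symmetric])
      have "b = k - 2 * m - a" using l by simp
      then show "bs \<in> ?f ` ?T" using w l c by (intro image_eqI[where x = "(m, a)"]) auto
    qed
    show "?f ` ?T \<subseteq> ?W"
    proof
      fix bs assume "bs \<in> ?f ` ?T"
      then obtain m a where ma: "2 * m + a \<le> k" "cond m a" "bs = word a m (k - 2 * m - a)" by auto
      have e: "int i + int a - int (k - 2 * m - a) = int i + 2 * int a - int (k - 2 * m)"
        using ma(1) by (simp add: of_nat_diff)
      have "int (vert n i bs) = int j"
        using ma vert_word[OF n i, of a m "k - 2 * m - a"] unfolding cond_def e by simp
      then show "bs \<in> ?W" using ma findp_word length_word by simp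
    qed
  qed
  have inj: "inj_on ?f ?T"
  proof (rule inj_onI)
    fix x y assume x: "x \<in> ?T" and y: "y \<in> ?T" and e: "?f x = ?f y"
    obtain m a where xm: "x = (m, a)" by fastforce
    obtain m' a' where ym: "y = (m', a')" by fastforce
    show "x = y" using word_inj[of a m "k - 2 * m - a" a' m' "k - 2 * m' - a'"] e xm ym by simp
  qed
  have ar: "2 * m + a \<le> k \<longleftrightarrow> m \<le> k div 2 \<and> a \<le> k - 2 * m" for m a :: nat by presburger
  have T: "?T = Sigma {..k div 2} (\<lambda>m. {a \<in> {..k - 2 * m}. cond m a})"
  proof -
    have "x \<in> ?T \<longleftrightarrow> x \<in> Sigma {..k div 2} (\<lambda>m. {a \<in> {..k - 2 * m}. cond m a})" for x
    proof -
      obtain m a where x: "x = (m, a)" by fastforce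
      show ?thesis unfolding x by (simp add: ar)
    qed
    then show ?thesis by blast
  qed
  have "card ?W = card ?T" unfolding W by (rule card_image[OF inj])
  also have "\<dots> = (\<Sum>m\<le>k div 2. card {a \<in> {..k - 2 * m}. cond m a})"
  proof -
    have fin: "\<forall>m\<in>{..k div 2}. finite {a \<in> {..k - 2 * m}. cond m a}"
    proof
      fix m show "finite {a \<in> {..k - 2 * m}. cond m a}"
        by (rule finite_subset[OF _ finite_atMost[of "k - 2 * m"]]) (rule subsetI, simp)
    qed
    show ?thesis unfolding T using card_SigmaI[OF finite_atMost fin] .
  qed
  also have "\<dots> = (\<Sum>m\<le>k div 2. (\<Sum>a\<le>k - 2 * m. if cond m a then 1 else 0))"
    by (intro sum.cong refl) (simp only: card_eq_sum sum.inter_filter[OF finite_atMost])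
  finally have "int (card ?W) = (\<Sum>m\<le>k div 2. (\<Sum>a\<le>k - 2 * m. if cond m a then 1 else 0 :: int))"
  proof -
    have ii: "int (if c then 1 else 0) = (if c then 1 else 0)" for c by simp
    show "card ?W = (\<Sum>m\<le>k div 2. (\<Sum>a\<le>k - 2 * m. if cond m a then 1 else 0)) \<Longrightarrow>
        int (card ?W) = (\<Sum>m\<le>k div 2. (\<Sum>a\<le>k - 2 * m. if cond m a then 1 else 0 :: int))"
      by (simp only: of_nat_sum ii)
  qed
  also have "\<dots> = Fc n k i j"
    unfolding Fc_def Pc_def cond_def by simp
  finally show ?thesis .
qed

lemma hdim_Fc: assumes n: "0 < n" and i: "i < n" shows "int (hdim n \<alpha> \<beta> k i j) = Fc n k i j"
  using hdim_words[OF n i, of \<alpha> \<beta> k j] card_words[OF n i, of k j] by simp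

lemma Fc_rec: "Fc n k i j = Pc n k i j + (if 2 \<le> k then Fc n (k - 2) i j else 0)"
proof (cases k)
  case 0 then show ?thesis by (simp add: Fc_def)
next
  case (Suc k1)
  show ?thesis
  proof (cases k1)
    case 0 then show ?thesis using Suc by (simp add: Fc_def)
  next
    case (Suc k')
    have d: "k div 2 = Suc (k' div 2)" using Suc \<open>k = Suc k1\<close> by simp
    have "Fc n k i j = Pc n (k - 2 * 0) i j + (\<Sum>m\<le>k' div 2. Pc n (k - 2 * Suc m) i j)"
      unfolding Fc_def d sum.atMost_Suc_shift by simp
    also have "(\<Sum>m\<le>k' div 2. Pc n (k - 2 * Suc m) i j) = Fc n k' i j"
      unfolding Fc_def using Suc \<open>k = Suc k1\<close> by (intro sum.cong refl) simp
    finally show ?thesis using Suc \<open>k = Suc k1\<close> by simp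
  qed
qed

lemma fps_E: "(1 - fps_X ^ 2) * Abs_fps (\<lambda>k. Fc n k i j) = Abs_fps (\<lambda>k. Pc n k i j)"
proof (rule fps_ext)
  fix k
  have "fps_nth ((1 - fps_X ^ 2) * Abs_fps (\<lambda>k. Fc n k i j)) k = Fc n k i j - (if k < 2 then 0 else Fc n (k - 2) i j)"
    by (simp add: left_diff_distrib fps_X_power_mult_nth)
  then show "fps_nth ((1 - fps_X ^ 2) * Abs_fps (\<lambda>k. Fc n k i j)) k = fps_nth (Abs_fps (\<lambda>k. Pc n k i j)) k"
    using Fc_rec[of n k i j] by auto
qed

lemma int_mod_m: "0 < n \<Longrightarrow> int ((j + n - 1) mod n) = (int j - 1) mod int n"
proof -
  assume n: "0 < n"
  have "int ((j + n - 1) mod n) = int (j + n - 1) mod int n" by (simp add: zmod_int)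
  also have "int (j + n - 1) = (int j - 1) + int n * 1" using n by simp
  also have "((int j - 1) + int n * 1) mod int n = (int j - 1) mod int n" by (rule mod_mult_self2)
  finally show ?thesis .
qed

lemma int_mod_p: "int (Suc j mod n) = (int j + 1) mod int n"
  by (simp add: zmod_int add.commute)

lemma modm: assumes n: "0 < n" and j: "j < n"
  shows "(x mod int n = int ((j + n - 1) mod n)) \<longleftrightarrow> ((x + 1) mod int n = int j)"
proof -
  have jj: "int j = int j mod int n" using j by simp
  have "(x mod int n = int ((j + n - 1) mod n)) \<longleftrightarrow> x mod int n = (int j - 1) mod int n"
    using int_mod_m[OF n] by simp
  also have "\<dots> \<longleftrightarrow> int n dvd x - (int j - 1)" by (rule mod_eq_dvd_iff)
  also have "\<dots> \<longleftrightarrow> int n dvd (x + 1) - int j" by (simp add: algebra_simps)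
  also have "\<dots> \<longleftrightarrow> (x + 1) mod int n = int j mod int n" by (rule mod_eq_dvd_iff[symmetric])
  finally show ?thesis using jj by simp
qed

lemma modp: assumes n: "0 < n" and j: "j < n"
  shows "(x mod int n = int (Suc j mod n)) \<longleftrightarrow> ((x - 1) mod int n = int j)"
proof -
  have jj: "int j = int j mod int n" using j by simp
  have "(x mod int n = int (Suc j mod n)) \<longleftrightarrow> x mod int n = (int j + 1) mod int n"
    using int_mod_p by simp
  also have "\<dots> \<longleftrightarrow> int n dvd x - (int j + 1)" by (rule mod_eq_dvd_iff)
  also have "\<dots> \<longleftrightarrow> int n dvd (x - 1) - int j" by (simp add: algebra_simps)
  also have "\<dots> \<longleftrightarrow> (x - 1) mod int n = int j mod int n" by (rule mod_eq_dvd_iff[symmetric])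
  finally show ?thesis using jj by simp
qed

context
  fixes n i j :: nat
  assumes n: "0 < n" and i: "i < n" and j: "j < n"
begin

definition gg :: "nat \<Rightarrow> nat \<Rightarrow> int" where
  "gg k a = (if (int i + 2 * int a - int (Suc k)) mod int n = int j then 1 else 0)"

lemma Pc_m: "Pc n k i ((j + n - 1) mod n) = (\<Sum>a\<le>k. gg k (Suc a))"
  unfolding Pc_def
proof (intro sum.cong refl)
  fix a
  have e: "int i + 2 * int (Suc a) - int (Suc k) = (int i + 2 * int a - int k) + 1" by simp
  show "(if (int i + 2 * int a - int k) mod int n = int ((j + n - 1) mod n) then 1 else 0) = gg k (Suc a)"
    unfolding gg_def e modm[OF n j] ..
qed

lemma Pc_p: "Pc n k i (Suc j mod n) = (\<Sum>a\<le>k. gg k a)"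
  unfolding Pc_def
proof (intro sum.cong refl)
  fix a
  have e: "int i + 2 * int a - int (Suc k) = (int i + 2 * int a - int k) - 1" by simp
  show "(if (int i + 2 * int a - int k) mod int n = int (Suc j mod n) then 1 else 0) = gg k a"
    unfolding gg_def e modp[OF n j] ..
qed

lemma Pc_S: "Pc n (Suc k) i j = (\<Sum>a\<le>Suc k. gg k a)"
  unfolding Pc_def gg_def ..

lemma Pc_SS: "Pc n k' i j = (\<Sum>a\<le>k'. gg (Suc k') (Suc a))"
  unfolding Pc_def
proof (intro sum.cong refl)
  fix a
  have e: "int i + 2 * int (Suc a) - int (Suc (Suc k')) = int i + 2 * int a - int k'" by simp
  show "(if (int i + 2 * int a - int k') mod int n = int j then 1 else 0) = gg (Suc k') (Suc a)"
    unfolding gg_def e ..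
qed

lemma Pc_rec: "Pc n (Suc k) i j + (case k of 0 \<Rightarrow> 0 | Suc k' \<Rightarrow> Pc n k' i j)
   = Pc n k i ((j + n - 1) mod n) + Pc n k i (Suc j mod n)"
proof -
  have A: "Pc n (Suc k) i j = gg k 0 + Pc n k i ((j + n - 1) mod n)"
    unfolding Pc_S Pc_m sum.atMost_Suc_shift ..
  show ?thesis
  proof (cases k)
    case 0
    then show ?thesis unfolding A Pc_p by simp
  next
    case (Suc k')
    have "Pc n k i (Suc j mod n) = gg k 0 + Pc n k' i j"
      unfolding Pc_p Suc Pc_SS sum.atMost_Suc_shift ..
    then show ?thesis unfolding A using Suc by simp
  qed
qed

lemma Pc0: "Pc n 0 i j = (if i = j then 1 else 0)"
  using i j by (simp add: Pc_def)

end

lemma Pc_rowp: assumes n: "0 < n" and j: "j < n"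
  shows "Pc n k (Suc i mod n) j = Pc n k i ((j + n - 1) mod n)"
  unfolding Pc_def
proof (intro sum.cong refl)
  fix a
  have "(int (Suc i mod n) + 2 * int a - int k) mod int n = ((int i + 1) mod int n + (2 * int a - int k)) mod int n"
    unfolding int_mod_p by (simp only: add_diff_eq)
  also have "\<dots> = (int i + 1 + (2 * int a - int k)) mod int n" by (rule mod_add_left_eq)
  also have "\<dots> = ((int i + 2 * int a - int k) + 1) mod int n" by (simp add: algebra_simps)
  finally have e: "(int (Suc i mod n) + 2 * int a - int k) mod int n = ((int i + 2 * int a - int k) + 1) mod int n" .
  show "(if (int (Suc i mod n) + 2 * int a - int k) mod int n = int j then 1 else 0) =
        (if (int i + 2 * int a - int k) mod int n = int ((j + n - 1) mod n) then 1 else (0::int))"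
    unfolding e modm[OF n j] ..
qed

lemma Pc_rowm: assumes n: "0 < n" and j: "j < n"
  shows "Pc n k ((i + n - 1) mod n) j = Pc n k i (Suc j mod n)"
  unfolding Pc_def
proof (intro sum.cong refl)
  fix a
  have "(int ((i + n - 1) mod n) + 2 * int a - int k) mod int n = ((int i - 1) mod int n + (2 * int a - int k)) mod int n"
    unfolding int_mod_m[OF n] by (simp only: add_diff_eq)
  also have "\<dots> = ((int i - 1) + (2 * int a - int k)) mod int n" by (rule mod_add_left_eq)
  also have "\<dots> = ((int i + 2 * int a - int k) - 1) mod int n" by (simp add: algebra_simps)
  finally have e: "(int ((i + n - 1) mod n) + 2 * int a - int k) mod int n = ((int i + 2 * int a - int k) - 1) mod int n" .
  show "(if (int ((i + n - 1) mod n) + 2 * int a - int k) mod int n = int j then 1 else 0) =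
        (if (int i + 2 * int a - int k) mod int n = int (Suc j mod n) then 1 else (0::int))"
    unfolding e modp[OF n j] ..
qed

definition pf :: "nat \<Rightarrow> nat \<Rightarrow> nat \<Rightarrow> int fps" where
  "pf n i j = Abs_fps (\<lambda>k. Pc n k i j)"

lemma key: assumes n: "0 < n" and i: "i < n" and j: "j < n"
  shows "(1 + fps_X ^ 2) * pf n i j - fps_X * (pf n i ((j + n - 1) mod n) + pf n i (Suc j mod n))
     = (if i = j then 1 else 0)"
proof (rule fps_ext)
  fix k
  show "fps_nth ((1 + fps_X ^ 2) * pf n i j - fps_X * (pf n i ((j + n - 1) mod n) + pf n i (Suc j mod n))) k
     = fps_nth (if i = j then 1 else 0 :: int fps) k"
  proof (cases k)
    case 0
    then show ?thesis using Pc0[OF n i j] by (simp add: pf_def distrib_right fps_X_power_mult_nth)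
  next
    case (Suc k0)
    have R: "Pc n (Suc k0) i j + (case k0 of 0 \<Rightarrow> 0 | Suc k' \<Rightarrow> Pc n k' i j)
       = Pc n k0 i ((j + n - 1) mod n) + Pc n k0 i (Suc j mod n)" by (rule Pc_rec[OF n i j])
    have L: "fps_nth ((1 + fps_X ^ 2) * pf n i j - fps_X * (pf n i ((j + n - 1) mod n) + pf n i (Suc j mod n))) (Suc k0)
       = Pc n (Suc k0) i j + (case k0 of 0 \<Rightarrow> 0 | Suc k' \<Rightarrow> Pc n k' i j)
         - (Pc n k0 i ((j + n - 1) mod n) + Pc n k0 i (Suc j mod n))"
      by (cases k0) (simp_all add: pf_def distrib_right fps_X_power_mult_nth)
    show ?thesis unfolding Suc L R by simp
  qed
qed

lemma adj_card: assumes n: "0 < n" and l: "l < n" and j: "j < n"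
  shows "card {a :: arrow. snd a < n \<and> arr_src n a = l \<and> arr_tgt n a = j}
     = (if Suc l mod n = j then 1 else 0) + (if (l + n - 1) mod n = j then 1 else 0)"
proof -
  let ?S1 = "if Suc l mod n = j then {(True, l)} else {}"
  let ?S2 = "if (l + n - 1) mod n = j then {(False, (l + n - 1) mod n)} else {}"
  have mem: "a \<in> {a :: arrow. snd a < n \<and> arr_src n a = l \<and> arr_tgt n a = j} \<longleftrightarrow> a \<in> ?S1 \<union> ?S2" for a
  proof -
    obtain b s where a: "a = (b, s)" by fastforce
    show ?thesis
    proof (cases b)
      case True
      have "(snd a < n \<and> arr_src n a = l \<and> arr_tgt n a = j) \<longleftrightarrow> s = l \<and> Suc l mod n = j"
        using l by (auto simp: a True arr_src_def arr_tgt_def)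
      then show ?thesis by (auto simp: a True)
    next
      case False
      have "(snd a < n \<and> arr_src n a = l \<and> arr_tgt n a = j) \<longleftrightarrow> s = (l + n - 1) mod n \<and> (l + n - 1) mod n = j"
        using m3[OF n l, of s] n by (auto simp: a False arr_src_def arr_tgt_def)
      then show ?thesis by (auto simp: a False)
    qed
  qed
  have S: "{a :: arrow. snd a < n \<and> arr_src n a = l \<and> arr_tgt n a = j} = ?S1 \<union> ?S2"
    using mem by blast
  have "card (?S1 \<union> ?S2) = card ?S1 + card ?S2" by (rule card_Un_disjoint) auto
  then show ?thesis unfolding S by simp
qed

context
  fixes n :: nat and \<alpha> \<beta> :: "nat \<Rightarrow> 'a::field"
  assumes n: "0 < n"
begin

lemma adj_dim[simp]: "dim_row (adjacency_matrix n) = n" "dim_col (adjacency_matrix n) = n"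
  by (simp_all add: adjacency_matrix_def)

lemma hil_dim[simp]: "dim_row (hilbert_matrix n \<alpha> \<beta>) = n" "dim_col (hilbert_matrix n \<alpha> \<beta>) = n"
  by (simp_all add: hilbert_matrix_def)

lemma fc2: "fps_const (2::int) = 2" by (simp add: numeral_fps_const)

abbreviation "MM \<equiv> map_mat fps_const (adjacency_matrix n) :: int fps mat"
abbreviation "HH \<equiv> hilbert_matrix n \<alpha> \<beta>"
abbreviation "II \<equiv> (1\<^sub>m n :: int fps mat)"
abbreviation "tt \<equiv> (fps_X :: int fps)"
abbreviation "BB \<equiv> (1 - tt ^ 2) \<cdot>\<^sub>m (II - tt \<cdot>\<^sub>m MM + tt ^ 2 \<cdot>\<^sub>m II)"
abbreviation "AA \<equiv> II - tt \<cdot>\<^sub>m MM + tt ^ 3 \<cdot>\<^sub>m MM - tt ^ 4 \<cdot>\<^sub>m II"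

lemma MM_dim: "dim_row MM = n" "dim_col MM = n"
  by (simp_all add: adjacency_matrix_def)

lemma HH_dim: "dim_row HH = n" "dim_col HH = n"
  by (simp_all add: hilbert_matrix_def)

lemma MM_idx: "l < n \<Longrightarrow> j < n \<Longrightarrow> MM $$ (l, j) = (if l = (j + n - 1) mod n then 1 else 0) + (if l = Suc j mod n then 1 else 0)"
proof -
  assume l: "l < n" and j: "j < n"
  have c1: "(Suc l mod n = j) = (l = (j + n - 1) mod n)" using m3[OF n j l] .
  have c2: "((l + n - 1) mod n = j) = (l = Suc j mod n)" using m3[OF n l j] by auto
  have "MM $$ (l, j) = fps_const (int ((if Suc l mod n = j then 1 else 0) + (if (l + n - 1) mod n = j then 1 else 0)))"
    using l j by (simp add: adjacency_matrix_def adj_card[OF n l j])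
  also have "\<dots> = (if l = (j + n - 1) mod n then 1 else 0) + (if l = Suc j mod n then 1 else 0)"
    unfolding c1 c2 by (cases "l = (j + n - 1) mod n"; cases "l = Suc j mod n") (simp_all add: fc2)
  finally show ?thesis .
qed

lemma MM_idx2: "i < n \<Longrightarrow> l < n \<Longrightarrow> MM $$ (i, l) = (if l = Suc i mod n then 1 else 0) + (if l = (i + n - 1) mod n then 1 else 0)"
proof -
  assume i: "i < n" and l: "l < n"
  have "MM $$ (i, l) = fps_const (int ((if Suc i mod n = l then 1 else 0) + (if (i + n - 1) mod n = l then 1 else 0)))"
    using i l by (simp add: adjacency_matrix_def adj_card[OF n i l])
  also have "\<dots> = (if l = Suc i mod n then 1 else 0) + (if l = (i + n - 1) mod n then 1 else 0)"
    by (cases "l = Suc i mod n"; cases "l = (i + n - 1) mod n") (auto simp: fc2)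
  finally show ?thesis .
qed

lemma HH_idx: "i < n \<Longrightarrow> j < n \<Longrightarrow> HH $$ (i, j) = Abs_fps (\<lambda>k. Fc n k i j)"
proof -
  assume i: "i < n" and j: "j < n"
  have "HH $$ (i, j) = Abs_fps (\<lambda>k. int (hdim n \<alpha> \<beta> k i j))"
    using i j by (simp add: hilbert_matrix_def)
  also have "\<dots> = Abs_fps (\<lambda>k. Fc n k i j)"
  proof -
    have "\<And>k. int (hdim n \<alpha> \<beta> k i j) = Fc n k i j" by (rule hdim_Fc[OF n i])
    then show ?thesis by simp
  qed
  finally show ?thesis .
qed

lemma EH: "i < n \<Longrightarrow> j < n \<Longrightarrow> (1 - tt ^ 2) * HH $$ (i, j) = pf n i j"
  using fps_E by (simp add: HH_idx pf_def)

lemma BB_dim: "dim_row BB = n" "dim_col BB = n"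
  by (simp_all add: MM_dim)

lemma BB_idx: "l < n \<Longrightarrow> j < n \<Longrightarrow> BB $$ (l, j) = (1 - tt ^ 2) * ((1 + tt ^ 2) * (if l = j then 1 else 0) - tt * MM $$ (l, j))"
  by (simp add: MM_dim algebra_simps)

lemma AA_BB: "AA = BB"
proof (rule eq_matI)
  fix l j assume l: "l < dim_row BB" and j: "j < dim_col BB"
  then have l': "l < n" and j': "j < n" using BB_dim by auto
  have "AA $$ (l, j) = (if l = j then 1 else 0) - tt * MM $$ (l, j) + tt ^ 3 * MM $$ (l, j) - tt ^ 4 * (if l = j then 1 else 0)"
    using l' j' by (simp add: MM_dim)
  also have "\<dots> = BB $$ (l, j)" unfolding BB_idx[OF l' j'] by (simp add: algebra_simps power2_eq_square power3_eq_cube power4_eq_xxxx)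
  finally show "AA $$ (l, j) = BB $$ (l, j)" .
qed (simp_all add: MM_dim)

lemma HB: "HH * BB = II"
proof (rule eq_matI)
  fix i j assume i0: "i < dim_row II" and j0: "j < dim_col II"
  then have i: "i < n" and j: "j < n" by auto
  define jm where "jm = (j + n - 1) mod n"
  define jp where "jp = Suc j mod n"
  have jm: "jm < n" and jp: "jp < n" using n by (simp_all add: jm_def jp_def)
  let ?c0 = "(1 - tt ^ 2) * (1 + tt ^ 2)"
  let ?c1 = "(1 - tt ^ 2) * tt"
  have "(HH * BB) $$ (i, j) = (\<Sum>l\<in>{0..<n}. HH $$ (i, l) * BB $$ (l, j))"
    using i j by (simp add: HH_dim BB_dim scalar_prod_def)
  also have "\<dots> = (\<Sum>l\<in>{0..<n}. ?c0 * (if l = j then HH $$ (i, l) else 0)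
        - ?c1 * ((if l = jm then HH $$ (i, l) else 0) + (if l = jp then HH $$ (i, l) else 0)))"
  proof (rule sum.cong[OF refl])
    fix l assume "l \<in> {0..<n}"
    then have l: "l < n" by simp
    show "HH $$ (i, l) * BB $$ (l, j) = ?c0 * (if l = j then HH $$ (i, l) else 0)
        - ?c1 * ((if l = jm then HH $$ (i, l) else 0) + (if l = jp then HH $$ (i, l) else 0))"
      unfolding BB_idx[OF l j] MM_idx[OF l j] jm_def[symmetric] jp_def[symmetric]
      by (cases "l = j"; cases "l = jm"; cases "l = jp") (simp_all add: algebra_simps)
  qed
  also have "\<dots> = ?c0 * (\<Sum>l\<in>{0..<n}. if l = j then HH $$ (i, l) else 0)
      - ?c1 * ((\<Sum>l\<in>{0..<n}. if l = jm then HH $$ (i, l) else 0) + (\<Sum>l\<in>{0..<n}. if l = jp then HH $$ (i, l) else 0))"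
    by (simp only: sum_subtractf sum.distrib sum_distrib_left distrib_left)
  also have "\<dots> = ?c0 * HH $$ (i, j) - ?c1 * (HH $$ (i, jm) + HH $$ (i, jp))"
  proof -
    have s0: "(\<Sum>l\<in>{0..<n}. if l = j then HH $$ (i, l) else 0) = HH $$ (i, j)" using j by simp
    have s1: "(\<Sum>l\<in>{0..<n}. if l = jm then HH $$ (i, l) else 0) = HH $$ (i, jm)" using jm by simp
    have s2: "(\<Sum>l\<in>{0..<n}. if l = jp then HH $$ (i, l) else 0) = HH $$ (i, jp)" using jp by simp
    show ?thesis unfolding s0 s1 s2 ..
  qed
  also have "\<dots> = (1 + tt ^ 2) * ((1 - tt ^ 2) * HH $$ (i, j)) - tt * ((1 - tt ^ 2) * HH $$ (i, jm) + (1 - tt ^ 2) * HH $$ (i, jp))"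
    by (simp add: algebra_simps)
  also have "\<dots> = (1 + tt ^ 2) * pf n i j - tt * (pf n i jm + pf n i jp)"
    unfolding EH[OF i j] EH[OF i jm] EH[OF i jp] ..
  also have "\<dots> = (if i = j then 1 else 0)"
    unfolding jm_def jp_def by (rule key[OF n i j])
  also have "\<dots> = II $$ (i, j)" using i j by simp
  finally show "(HH * BB) $$ (i, j) = II $$ (i, j)" .
qed (simp_all add: HH_dim BB_dim)

lemma BH: "BB * HH = II"
proof (rule eq_matI)
  fix i j assume i0: "i < dim_row II" and j0: "j < dim_col II"
  then have i: "i < n" and j: "j < n" by auto
  define ip where "ip = Suc i mod n"
  define im where "im = (i + n - 1) mod n"
  have ip: "ip < n" and im: "im < n" using n by (simp_all add: ip_def im_def)
  let ?c0 = "(1 - tt ^ 2) * (1 + tt ^ 2)"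
  let ?c1 = "(1 - tt ^ 2) * tt"
  have "(BB * HH) $$ (i, j) = (\<Sum>l\<in>{0..<n}. BB $$ (i, l) * HH $$ (l, j))"
    using i j by (simp add: HH_dim BB_dim scalar_prod_def del: index_smult_mat index_add_mat index_minus_mat index_one_mat index_map_mat)
  also have "\<dots> = (\<Sum>l\<in>{0..<n}. ?c0 * (if l = i then HH $$ (l, j) else 0)
        - ?c1 * ((if l = ip then HH $$ (l, j) else 0) + (if l = im then HH $$ (l, j) else 0)))"
  proof (rule sum.cong[OF refl])
    fix l assume "l \<in> {0..<n}"
    then have l: "l < n" by simp
    show "BB $$ (i, l) * HH $$ (l, j) = ?c0 * (if l = i then HH $$ (l, j) else 0)
        - ?c1 * ((if l = ip then HH $$ (l, j) else 0) + (if l = im then HH $$ (l, j) else 0))"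
      unfolding BB_idx[OF i l] MM_idx2[OF i l] ip_def[symmetric] im_def[symmetric]
      by (cases "l = i"; cases "l = ip"; cases "l = im") (simp_all add: algebra_simps)
  qed
  also have "\<dots> = ?c0 * (\<Sum>l\<in>{0..<n}. if l = i then HH $$ (l, j) else 0)
      - ?c1 * ((\<Sum>l\<in>{0..<n}. if l = ip then HH $$ (l, j) else 0) + (\<Sum>l\<in>{0..<n}. if l = im then HH $$ (l, j) else 0))"
    by (simp only: sum_subtractf sum.distrib sum_distrib_left distrib_left)
  also have "\<dots> = ?c0 * HH $$ (i, j) - ?c1 * (HH $$ (ip, j) + HH $$ (im, j))"
  proof -
    have s0: "(\<Sum>l\<in>{0..<n}. if l = i then HH $$ (l, j) else 0) = HH $$ (i, j)" using i by simp
    have s1: "(\<Sum>l\<in>{0..<n}. if l = ip then HH $$ (l, j) else 0) = HH $$ (ip, j)" using ip by simp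
    have s2: "(\<Sum>l\<in>{0..<n}. if l = im then HH $$ (l, j) else 0) = HH $$ (im, j)" using im by simp
    show ?thesis unfolding s0 s1 s2 ..
  qed
  also have "\<dots> = (1 + tt ^ 2) * ((1 - tt ^ 2) * HH $$ (i, j)) - tt * ((1 - tt ^ 2) * HH $$ (ip, j) + (1 - tt ^ 2) * HH $$ (im, j))"
    by (simp add: algebra_simps)
  also have "\<dots> = (1 + tt ^ 2) * pf n i j - tt * (pf n ip j + pf n im j)"
    unfolding EH[OF i j] EH[OF ip j] EH[OF im j] ..
  also have "pf n ip j = pf n i ((j + n - 1) mod n)"
    unfolding ip_def pf_def using Pc_rowp[OF n j] by simp
  also have "pf n im j = pf n i (Suc j mod n)"
    unfolding im_def pf_def using Pc_rowm[OF n j] by simp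
  also have "(1 + tt ^ 2) * pf n i j - tt * (pf n i ((j + n - 1) mod n) + pf n i (Suc j mod n)) = (if i = j then 1 else 0)"
    by (rule key[OF n i j])
  also have "\<dots> = II $$ (i, j)" using i j by simp
  finally show "(BB * HH) $$ (i, j) = II $$ (i, j)" .
qed (simp_all add: HH_dim BB_dim)

end

theorem lemma3p5:
  fixes \<alpha> \<beta> :: "nat \<Rightarrow> 'a::field_char_0" and n :: nat
  assumes "n \<ge> 1"
    and "\<forall>p :: 'a poly. degree p > 0 \<longrightarrow> (\<exists>x. poly p x = 0)"
  defines "M \<equiv> map_mat fps_const (adjacency_matrix n)"
    and "h \<equiv> hilbert_matrix n \<alpha> \<beta>"
    and "I \<equiv> (1\<^sub>m n :: int fps mat)"
    and "t \<equiv> (fps_X :: int fps)"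
  shows "h * (I - t \<cdot>\<^sub>m M + t ^ 3 \<cdot>\<^sub>m M - t ^ 4 \<cdot>\<^sub>m I) = I
       \<and> (I - t \<cdot>\<^sub>m M + t ^ 3 \<cdot>\<^sub>m M - t ^ 4 \<cdot>\<^sub>m I) * h = I
       \<and> h * ((1 - t ^ 2) \<cdot>\<^sub>m (I - t \<cdot>\<^sub>m M + t ^ 2 \<cdot>\<^sub>m I)) = I
       \<and> ((1 - t ^ 2) \<cdot>\<^sub>m (I - t \<cdot>\<^sub>m M + t ^ 2 \<cdot>\<^sub>m I)) * h = I"
proof -
  have n: "0 < n" using assms(1) by simp
  have AB: "I - t \<cdot>\<^sub>m M + t ^ 3 \<cdot>\<^sub>m M - t ^ 4 \<cdot>\<^sub>m I = (1 - t ^ 2) \<cdot>\<^sub>m (I - t \<cdot>\<^sub>m M + t ^ 2 \<cdot>\<^sub>m I)"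
    unfolding M_def I_def t_def by (rule AA_BB[OF n])
  have c3: "h * ((1 - t ^ 2) \<cdot>\<^sub>m (I - t \<cdot>\<^sub>m M + t ^ 2 \<cdot>\<^sub>m I)) = I"
    unfolding M_def h_def I_def t_def by (rule HB[OF n])
  have c4: "((1 - t ^ 2) \<cdot>\<^sub>m (I - t \<cdot>\<^sub>m M + t ^ 2 \<cdot>\<^sub>m I)) * h = I"
    unfolding M_def h_def I_def t_def by (rule BH[OF n])
  show ?thesis unfolding AB using c3 c4 by simp
qed

end
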